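(* Let $\Bbbk$ be a field, $n\ge2$, $q\in\Bbbk$ a primitive $n$-th root of unity, $T_n(q)$ the Taft algebra and $A$ a unital associative $\Bbbk$-algebra. Let $\cdot:T_n(q)\otimes A\to A$ be a linear map with $g\cdot1_A\in\{0,1_A\}$ and $x\cdot1_A\in Z(A)$. Then $\cdot$ is a partial action of $T_n(q)$ on $A$ if and only if either $\cdot$ is a global action, or the restriction of $\cdot$ to $\Bbbk C_n\otimes A$ is a partial action of $\Bbbk C_n$ on $A$ with $g\cdot1_A=0$ and, for all $0\le i,j\le n-1$ and $a\in A$: (i) $g^ix^j\cdot a=q^{-ij}(x\cdot1_A)^j\sum_{k=0}^{j}(-1)^kq^{-\frac{k(k-1)}{2}}\binom{j}{k}_{q^{-1}}(g^{i+k}\cdot a)$; (ii) $g^i\cdot(x\cdot1_A)=q^{-i}(g^i\cdot1_A)(x\cdot1_A)$.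
   Context: The Taft algebra $T_n(q)$ is the Hopf algebra generated by $g,x$ with relations $g^n=1$, $x^n=0$, $xg=qgx$, basis $\{g^ix^j\}$, $g$ group-like, $\Delta(x)=x\otimes1+g\otimes x$, $\varepsilon(x)=0$; $\Bbbk C_n=\mathrm{span}\{1,g,\dots,g^{n-1}\}$; exponents of $g$ are read modulo $n$. $Z(A)$ is the center of $A$. A partial action of a bialgebra $H$ on $A$ is a linear map $\cdot:H\otimes A\to A$ with $1_H\cdot a=a$, $h\cdot(ab)=(h_1\cdot a)(h_2\cdot b)$, $h\cdot(k\cdot a)=(h_1\cdot1_A)(h_2k\cdot a)$; it is global if moreover $h\cdot1_A=\varepsilon(h)1_A$ for all $h$. $q$-binomials: $\binom{0}{0}_p=1$, $\binom{N}{m}_p=0$ if $m>N$ or $m<0$, and $\binom{N}{m}_p=\binom{N-1}{m-1}_p+p^m\binom{N-1}{m}_p$ for $N\ge1$, $0\le m\le N$. *)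

theory Defs
  imports Main
begin

definition is_algebra :: "('k::field \<Rightarrow> 'a::ring_1 \<Rightarrow> 'a) \<Rightarrow> bool" where
  "is_algebra sc \<longleftrightarrow>
     (\<forall>c d a. sc (c + d) a = sc c a + sc d a) \<and>
     (\<forall>c a b. sc c (a + b) = sc c a + sc c b) \<and>
     (\<forall>c d a. sc (c * d) a = sc c (sc d a)) \<and>
     (\<forall>a. sc 1 a = a) \<and>
     (\<forall>c a b. sc c (a * b) = sc c a * b) \<and>
     (\<forall>c a b. sc c (a * b) = a * sc c b)"

definition linear_map :: "('k::field \<Rightarrow> 'a::ring_1 \<Rightarrow> 'a) \<Rightarrow> ('a \<Rightarrow> 'a) \<Rightarrow> bool" where
  "linear_map sc f \<longleftrightarrow> (\<forall>a b. f (a + b) = f a + f b) \<and> (\<forall>c a. f (sc c a) = sc c (f a))"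

(* A finite-dimensional bialgebra H is given by a finite basis B, multiplication
   structure constants mu b b' c (coefficient of c in b*b'), comultiplication
   Delta c (b,b') (coefficient of b\<otimes>b' in Delta(c)), unit and counit coefficients.
   Elements of H are coefficient functions 'b \<Rightarrow> 'k (only values on B matter).
   A linear map H\<otimes>A \<rightarrow> A is given by its values act b on the basis (each linear). *)

definition basis_el :: "'b \<Rightarrow> 'b \<Rightarrow> 'k::field" where
  "basis_el b = (\<lambda>c. if c = b then 1 else 0)"

definition hact :: "('k::field \<Rightarrow> 'a::ring_1 \<Rightarrow> 'a) \<Rightarrow> 'b set \<Rightarrow> ('b \<Rightarrow> 'a \<Rightarrow> 'a)
                    \<Rightarrow> ('b \<Rightarrow> 'k) \<Rightarrow> 'a \<Rightarrow> 'a" where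
  "hact sc B act h a = (\<Sum>b\<in>B. sc (h b) (act b a))"

definition hmul :: "'b set \<Rightarrow> ('b \<Rightarrow> 'b \<Rightarrow> 'b \<Rightarrow> 'k::field) \<Rightarrow> ('b \<Rightarrow> 'k) \<Rightarrow> ('b \<Rightarrow> 'k) \<Rightarrow> 'b \<Rightarrow> 'k" where
  "hmul B mu h k = (\<lambda>c. \<Sum>b\<in>B. \<Sum>b'\<in>B. h b * k b' * mu b b' c)"

definition partial_action ::
  "('k::field \<Rightarrow> 'a::ring_1 \<Rightarrow> 'a) \<Rightarrow> 'b set \<Rightarrow> ('b \<Rightarrow> 'b \<Rightarrow> 'b \<Rightarrow> 'k)
   \<Rightarrow> ('b \<Rightarrow> 'b \<times> 'b \<Rightarrow> 'k) \<Rightarrow> ('b \<Rightarrow> 'k) \<Rightarrow> ('b \<Rightarrow> 'a \<Rightarrow> 'a) \<Rightarrow> bool" where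
  "partial_action sc B mu Delta one act \<longleftrightarrow>
     (\<forall>a. hact sc B act one a = a) \<and>
     (\<forall>h a a'. hact sc B act h (a * a') =
        (\<Sum>c\<in>B. \<Sum>b\<in>B. \<Sum>b'\<in>B. sc (h c * Delta c (b, b')) (act b a * act b' a'))) \<and>
     (\<forall>h k a. hact sc B act h (hact sc B act k a) =
        (\<Sum>c\<in>B. \<Sum>b\<in>B. \<Sum>b'\<in>B. sc (h c * Delta c (b, b'))
            (act b 1 * hact sc B act (hmul B mu (basis_el b') k) a)))"

definition global_action ::
  "('k::field \<Rightarrow> 'a::ring_1 \<Rightarrow> 'a) \<Rightarrow> 'b set \<Rightarrow> ('b \<Rightarrow> 'b \<Rightarrow> 'b \<Rightarrow> 'k)
   \<Rightarrow> ('b \<Rightarrow> 'b \<times> 'b \<Rightarrow> 'k) \<Rightarrow> ('b \<Rightarrow> 'k) \<Rightarrow> ('b \<Rightarrow> 'k) \<Rightarrow> ('b \<Rightarrow> 'a \<Rightarrow> 'a) \<Rightarrow> bool" where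
  "global_action sc B mu Delta one eps act \<longleftrightarrow>
     partial_action sc B mu Delta one act \<and>
     (\<forall>h. hact sc B act h 1 = sc (\<Sum>b\<in>B. h b * eps b) 1)"

definition tens_mul :: "'b set \<Rightarrow> ('b \<Rightarrow> 'b \<Rightarrow> 'b \<Rightarrow> 'k::field)
    \<Rightarrow> ('b \<times> 'b \<Rightarrow> 'k) \<Rightarrow> ('b \<times> 'b \<Rightarrow> 'k) \<Rightarrow> 'b \<times> 'b \<Rightarrow> 'k" where
  "tens_mul B mu X Y = (\<lambda>(c, c'). \<Sum>p\<in>B \<times> B. \<Sum>p'\<in>B \<times> B.
      X p * Y p' * mu (fst p) (fst p') c * mu (snd p) (snd p') c')"

(* Taft algebra T_n(q): basis (i,j) <-> g^i x^j, 0 \<le> i,j < n *)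
definition taft_basis :: "nat \<Rightarrow> (nat \<times> nat) set" where
  "taft_basis n = {..<n} \<times> {..<n}"

(* g^i x^j * g^k x^l = q^(jk) g^(i+k) x^(j+l)  (zero if j+l \<ge> n) *)
definition taft_mu :: "nat \<Rightarrow> 'k::field \<Rightarrow> nat \<times> nat \<Rightarrow> nat \<times> nat \<Rightarrow> nat \<times> nat \<Rightarrow> 'k" where
  "taft_mu n q b b' c = (if fst c = (fst b + fst b') mod n \<and> snd c = snd b + snd b'
                          then q ^ (snd b * fst b') else 0)"

definition taft_Dg :: "nat \<Rightarrow> (nat \<times> nat) \<times> (nat \<times> nat) \<Rightarrow> 'k::field" where
  "taft_Dg n = basis_el ((1 mod n, 0), (1 mod n, 0))"

definition taft_Dx :: "nat \<Rightarrow> (nat \<times> nat) \<times> (nat \<times> nat) \<Rightarrow> 'k::field" where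
  "taft_Dx n = (\<lambda>p. (if p = ((0, 1), (0, 0)) then 1 else 0)
                   + (if p = ((1 mod n, 0), (0, 1)) then 1 else 0))"

(* Delta(g^i x^j) = Delta(g)^i Delta(x)^j computed in T\<otimes>T *)
definition taft_Delta :: "nat \<Rightarrow> 'k::field \<Rightarrow> nat \<times> nat \<Rightarrow> (nat \<times> nat) \<times> (nat \<times> nat) \<Rightarrow> 'k" where
  "taft_Delta n q b =
     ((tens_mul (taft_basis n) (taft_mu n q) (taft_Dg n)) ^^ (fst b))
       (((tens_mul (taft_basis n) (taft_mu n q) (taft_Dx n)) ^^ (snd b))
          (basis_el ((0, 0), (0, 0))))"

definition taft_eps :: "nat \<times> nat \<Rightarrow> 'k::field" where
  "taft_eps b = (if snd b = 0 then 1 else 0)"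

(* group algebra k C_n: basis i <-> g^i *)
definition cn_mu :: "nat \<Rightarrow> nat \<Rightarrow> nat \<Rightarrow> nat \<Rightarrow> 'k::field" where
  "cn_mu n i k r = (if r = (i + k) mod n then 1 else 0)"

definition cn_Delta :: "nat \<Rightarrow> nat \<times> nat \<Rightarrow> 'k::field" where
  "cn_Delta c p = (if p = (c, c) then 1 else 0)"

definition primitive_root :: "nat \<Rightarrow> 'k::field \<Rightarrow> bool" where
  "primitive_root n q \<longleftrightarrow> q ^ n = 1 \<and> (\<forall>m. 0 < m \<and> m < n \<longrightarrow> q ^ m \<noteq> 1)"

fun qbinom :: "'k::field \<Rightarrow> nat \<Rightarrow> nat \<Rightarrow> 'k" where
  "qbinom p 0 m = (if m = 0 then 1 else 0)"
| "qbinom p (Suc N) 0 = qbinom p N 0"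
| "qbinom p (Suc N) (Suc m) =
     (if Suc m > Suc N then 0 else qbinom p N m + p ^ Suc m * qbinom p N (Suc m))"

end

theory Submission
  imports Defs
begin


lemma qbinom_zero_right[simp]: "qbinom p N 0 = 1"
  by (induction N) auto

lemma qbinom_gt: "m > N \<Longrightarrow> qbinom p N m = 0"
proof (induction N arbitrary: m)
  case 0 thus ?case by simp
next
  case (Suc N) thus ?case by (cases m) auto
qed

lemma qbinom_Suc_Suc: "qbinom p (Suc N) (Suc m) = qbinom p N m + p ^ Suc m * qbinom p N (Suc m)"
  by (auto simp: qbinom_gt)

declare qbinom.simps(3)[simp del]

lemma qbinom_Suc: "qbinom p (Suc N) k = (if k = 0 then 0 else qbinom p N (k - 1)) + p ^ k * qbinom p N k"
  by (cases k) (simp_all add: qbinom_Suc_Suc del: qbinom.simps(3))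

lemma qbinom_diag[simp]: "qbinom p N N = 1"
  by (induction N) (auto simp: qbinom_Suc_Suc qbinom_gt)

lemma qbinom_other: "qbinom p (Suc N) (Suc k) = qbinom p N (Suc k) + p ^ (N - k) * qbinom p N k"
proof (induction N arbitrary: k)
  case 0 thus ?case by (cases k) (auto simp: qbinom_gt)
next
  case (Suc N)
  show ?case
  proof (cases k)
    case 0
    have h1: "qbinom p (Suc N) (Suc 0) = qbinom p N (Suc 0) + p ^ N" using Suc[of 0] by simp
    have h2: "qbinom p (Suc N) 1 = 1 + p * qbinom p N 1" using qbinom_Suc_Suc[of p N 0] by simp
    have "qbinom p (Suc (Suc N)) 1 = 1 + p * qbinom p (Suc N) 1" using qbinom_Suc_Suc[of p "Suc N" 0] by simp
    also have "\<dots> = 1 + p * qbinom p N 1 + p ^ Suc N" using h1 by (simp add: algebra_simps)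
    finally have "qbinom p (Suc (Suc N)) 1 = 1 + p * qbinom p N 1 + p ^ Suc N" .
    then show ?thesis using 0 h2 by (simp del: qbinom.simps(3))
  next
    case (Suc k')
    note IH = Suc.IH
    have A: "qbinom p (Suc N) (Suc k') = qbinom p N (Suc k') + p ^ (N - k') * qbinom p N k'" using IH[of k'] .
    have B: "qbinom p (Suc N) (Suc (Suc k')) = qbinom p N (Suc (Suc k')) + p ^ (N - Suc k') * qbinom p N (Suc k')" using IH[of "Suc k'"] .
    have C: "qbinom p (Suc N) (Suc (Suc k')) = qbinom p N (Suc k') + p ^ Suc (Suc k') * qbinom p N (Suc (Suc k'))" by (rule qbinom_Suc_Suc)
    have D: "qbinom p (Suc N) (Suc k') = qbinom p N k' + p ^ Suc k' * qbinom p N (Suc k')" by (rule qbinom_Suc_Suc)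
    have E: "p ^ Suc (Suc k') * (p ^ (N - Suc k') * qbinom p N (Suc k')) = p ^ (Suc N - Suc k') * (p ^ Suc k' * qbinom p N (Suc k'))"
    proof (cases "Suc k' \<le> N")
      case True
      hence "Suc (Suc k') + (N - Suc k') = (Suc N - Suc k') + Suc k'" by simp
      hence "p ^ Suc (Suc k') * p ^ (N - Suc k') = p ^ (Suc N - Suc k') * p ^ Suc k'" by (metis power_add)
      thus ?thesis by (metis mult.assoc)
    next
      case False thus ?thesis by (simp add: qbinom_gt)
    qed
    have "qbinom p (Suc (Suc N)) (Suc k) = qbinom p (Suc N) (Suc k') + p ^ Suc (Suc k') * qbinom p (Suc N) (Suc (Suc k'))"
      unfolding Suc by (rule qbinom_Suc_Suc)
    also have "\<dots> = qbinom p N (Suc k') + p ^ (N - k') * qbinom p N k' + p ^ Suc (Suc k') * qbinom p N (Suc (Suc k')) + p ^ Suc (Suc k') * (p ^ (N - Suc k') * qbinom p N (Suc k'))"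
      by (simp only: A B distrib_left add.assoc)
    also have "\<dots> = qbinom p (Suc N) (Suc (Suc k')) + p ^ (Suc N - Suc k') * qbinom p (Suc N) (Suc k')"
      by (simp only: E C D distrib_left diff_Suc_Suc add_ac)
    finally show ?thesis using Suc by simp
  qed
qed


locale alg =
  fixes sc :: "'k::field \<Rightarrow> 'a::ring_1 \<Rightarrow> 'a"
  assumes alg: "is_algebra sc"
begin

lemma sc_addL: "sc (s + t) x = sc s x + sc t x" using alg unfolding is_algebra_def by blast
lemma sc_addR: "sc s (x + y) = sc s x + sc s y" using alg unfolding is_algebra_def by blast
lemma sc_assoc: "sc (s * t) x = sc s (sc t x)" using alg unfolding is_algebra_def by blast
lemma sc_one[simp]: "sc 1 x = x" using alg unfolding is_algebra_def by blast
lemma sc_mulL: "sc s x * y = sc s (x * y)" using alg unfolding is_algebra_def by metis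
lemma sc_mulR: "x * sc s y = sc s (x * y)" using alg unfolding is_algebra_def by metis
lemma sc_0L[simp]: "sc 0 x = 0"
proof -
  have "sc 0 x = sc 0 x + sc 0 x" using sc_addL[of 0 0 x] by simp
  thus ?thesis by simp
qed
lemma sc_0R[simp]: "sc s 0 = 0"
proof -
  have "sc s 0 = sc s 0 + sc s 0" using sc_addR[of s 0 0] by simp
  thus ?thesis by simp
qed
lemma sc_negR: "sc s (- x) = - sc s x"
  using sc_addR[of s x "-x"] by (metis add.right_inverse minus_unique sc_0R)
lemma sc_diffR: "sc s (x - y) = sc s x - sc s y"
  using sc_addR[of s x "-y"] sc_negR by simp
lemma sc_negL: "sc (- s) x = - sc s x"
  using sc_addL[of s "-s" x] by (metis add.right_inverse minus_unique sc_0L)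
lemma sc_diffL: "sc (s - t) x = sc s x - sc t x"
  using sc_addL[of s "-t" x] sc_negL by simp
lemma sc_sumR: "sc s (\<Sum>i\<in>I. f i) = (\<Sum>i\<in>I. sc s (f i))"
  by (induction I rule: infinite_finite_induct) (auto simp: sc_addR)
lemma sc_sumL: "sc (\<Sum>i\<in>I. f i) x = (\<Sum>i\<in>I. sc (f i) x)"
  by (induction I rule: infinite_finite_induct) (auto simp: sc_addL)
lemma sc_comm: "sc s (sc t x) = sc t (sc s x)"
  by (metis sc_assoc mult.commute)
lemma sc_central: "sc s 1 * x = x * sc s 1"
  by (simp add: sc_mulL sc_mulR)

lemma lin_add: "linear_map sc f \<Longrightarrow> f (x + y) = f x + f y" unfolding linear_map_def by blast
lemma lin_sc: "linear_map sc f \<Longrightarrow> f (sc s x) = sc s (f x)" unfolding linear_map_def by blast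
lemma lin_0: "linear_map sc f \<Longrightarrow> f 0 = 0"
  using lin_sc[of f 0 0] by simp
lemma lin_neg: "linear_map sc f \<Longrightarrow> f (- x) = - f x"
  using lin_add[of f x "-x"] lin_0[of f] by (metis add.right_inverse minus_unique)
lemma lin_diff: "linear_map sc f \<Longrightarrow> f (x - y) = f x - f y"
  using lin_add[of f x "-y"] lin_neg[of f y] by simp
lemma lin_sum: "linear_map sc f \<Longrightarrow> f (\<Sum>i\<in>I. g i) = (\<Sum>i\<in>I. f (g i))"
  by (induction I rule: infinite_finite_induct) (auto simp: lin_add lin_0)

lemma hact_basis: "finite B \<Longrightarrow> b \<in> B \<Longrightarrow> hact sc B act (basis_el b) a = act b a"
  unfolding hact_def basis_el_def
  by (simp add: if_distrib[of "\<lambda>s. sc s _"] sum.delta cong: if_cong)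

lemma sum_basis_el: "finite B \<Longrightarrow> c \<in> B \<Longrightarrow> (\<Sum>c'\<in>B. sc (basis_el c c' * D c') (X c')) = sc (D c) (X c)"
proof -
  assume "finite B" "c \<in> B"
  have "(\<Sum>c'\<in>B. sc (basis_el c c' * D c') (X c')) = (\<Sum>c'\<in>B. if c' = c then sc (D c) (X c) else 0)"
    unfolding basis_el_def by (rule sum.cong) auto
  thus ?thesis using \<open>finite B\<close> \<open>c \<in> B\<close> by simp
qed

lemma hmul_basis: "finite B \<Longrightarrow> b' \<in> B \<Longrightarrow> hmul B mu (basis_el b') k = (\<lambda>e. \<Sum>d\<in>B. k d * mu b' d e)"
proof -
  assume "finite B" "b' \<in> B"
  show ?thesis unfolding hmul_def
  proof
    fix e
    have "(\<Sum>b\<in>B. \<Sum>b''\<in>B. basis_el b' b * k b'' * mu b b'' e) = (\<Sum>b\<in>B. if b = b' then (\<Sum>d\<in>B. k d * mu b' d e) else 0)"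
      unfolding basis_el_def by (rule sum.cong) auto
    thus "(\<Sum>b\<in>B. \<Sum>b''\<in>B. basis_el b' b * k b'' * mu b b'' e) = (\<Sum>d\<in>B. k d * mu b' d e)"
      using \<open>finite B\<close> \<open>b' \<in> B\<close> by simp
  qed
qed

lemma partial_iff:
  assumes fin: "finite B" and b0: "b0 \<in> B" and lin: "\<forall>b\<in>B. linear_map sc (act b)"
  shows "partial_action sc B mu Delta (basis_el b0) act \<longleftrightarrow>
    (\<forall>a. act b0 a = a) \<and>
    (\<forall>c\<in>B. \<forall>a a'. act c (a * a') = (\<Sum>b\<in>B. \<Sum>b'\<in>B. sc (Delta c (b, b')) (act b a * act b' a'))) \<and>
    (\<forall>c\<in>B. \<forall>d\<in>B. \<forall>a. act c (act d a) =
        (\<Sum>b\<in>B. \<Sum>b'\<in>B. sc (Delta c (b, b')) (act b 1 * (\<Sum>e\<in>B. sc (mu b' d e) (act e a)))))"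
    (is "?L \<longleftrightarrow> ?U \<and> ?M \<and> ?C")
proof
  assume L: ?L
  have U: ?U using L hact_basis[OF fin b0] unfolding partial_action_def by metis
  have M: ?M
  proof (intro ballI allI)
    fix c a a' assume c: "c \<in> B"
    have "act c (a * a') = hact sc B act (basis_el c) (a * a')" using hact_basis[OF fin c] by simp
    also have "\<dots> = (\<Sum>c'\<in>B. \<Sum>b\<in>B. \<Sum>b'\<in>B. sc (basis_el c c' * Delta c' (b, b')) (act b a * act b' a'))"
      using L unfolding partial_action_def by blast
    also have "\<dots> = (\<Sum>c'\<in>B. sc (basis_el c c' * 1) (\<Sum>b\<in>B. \<Sum>b'\<in>B. sc (Delta c' (b, b')) (act b a * act b' a')))"
      by (simp add: sc_sumR sc_assoc)
    also have "\<dots> = (\<Sum>b\<in>B. \<Sum>b'\<in>B. sc (Delta c (b, b')) (act b a * act b' a'))"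
      using sum_basis_el[OF fin c, of "\<lambda>_. 1"] by simp
    finally show "act c (a * a') = (\<Sum>b\<in>B. \<Sum>b'\<in>B. sc (Delta c (b, b')) (act b a * act b' a'))" .
  qed
  have C: ?C
  proof (intro ballI allI)
    fix c d a assume c: "c \<in> B" and d: "d \<in> B"
    have hm: "\<And>b'. b' \<in> B \<Longrightarrow> hact sc B act (hmul B mu (basis_el b') (basis_el d)) a = (\<Sum>e\<in>B. sc (mu b' d e) (act e a))"
    proof -
      fix b' assume b': "b' \<in> B"
      have "hmul B mu (basis_el b') (basis_el d) = (\<lambda>e. mu b' d e)"
      proof
        fix e
        have "(\<Sum>d'\<in>B. basis_el d d' * mu b' d' e) = (\<Sum>d'\<in>B. if d' = d then mu b' d e else 0)"
          unfolding basis_el_def by (rule sum.cong) auto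
        thus "hmul B mu (basis_el b') (basis_el d) e = mu b' d e"
          unfolding hmul_basis[OF fin b'] using fin d by simp
      qed
      thus "hact sc B act (hmul B mu (basis_el b') (basis_el d)) a = (\<Sum>e\<in>B. sc (mu b' d e) (act e a))"
        unfolding hact_def by simp
    qed
    have "act c (act d a) = hact sc B act (basis_el c) (hact sc B act (basis_el d) a)"
      using hact_basis[OF fin c] hact_basis[OF fin d] by simp
    also have "\<dots> = (\<Sum>c'\<in>B. \<Sum>b\<in>B. \<Sum>b'\<in>B. sc (basis_el c c' * Delta c' (b, b'))
            (act b 1 * hact sc B act (hmul B mu (basis_el b') (basis_el d)) a))"
      using L unfolding partial_action_def by blast
    also have "\<dots> = (\<Sum>c'\<in>B. \<Sum>b\<in>B. \<Sum>b'\<in>B. sc (basis_el c c' * Delta c' (b, b'))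
            (act b 1 * (\<Sum>e\<in>B. sc (mu b' d e) (act e a))))"
      by (intro sum.cong refl) (simp add: hm)
    also have "\<dots> = (\<Sum>c'\<in>B. sc (basis_el c c' * 1) (\<Sum>b\<in>B. \<Sum>b'\<in>B. sc (Delta c' (b, b')) (act b 1 * (\<Sum>e\<in>B. sc (mu b' d e) (act e a)))))"
      by (simp add: sc_sumR sc_assoc)
    also have "\<dots> = (\<Sum>b\<in>B. \<Sum>b'\<in>B. sc (Delta c (b, b')) (act b 1 * (\<Sum>e\<in>B. sc (mu b' d e) (act e a))))"
      using sum_basis_el[OF fin c, of "\<lambda>_. 1"] by simp
    finally show "act c (act d a) = (\<Sum>b\<in>B. \<Sum>b'\<in>B. sc (Delta c (b, b')) (act b 1 * (\<Sum>e\<in>B. sc (mu b' d e) (act e a))))" .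
  qed
  show "?U \<and> ?M \<and> ?C" using U M C by blast
next
  assume R: "?U \<and> ?M \<and> ?C"
  hence U: ?U and M: ?M and C: ?C by blast+
  have 1: "\<forall>a. hact sc B act (basis_el b0) a = a" using U hact_basis[OF fin b0] by simp
  have 2: "\<forall>h a a'. hact sc B act h (a * a') =
        (\<Sum>c\<in>B. \<Sum>b\<in>B. \<Sum>b'\<in>B. sc (h c * Delta c (b, b')) (act b a * act b' a'))"
  proof (intro allI)
    fix h a a'
    have "hact sc B act h (a * a') = (\<Sum>c\<in>B. sc (h c) (act c (a * a')))" unfolding hact_def ..
    also have "\<dots> = (\<Sum>c\<in>B. sc (h c) (\<Sum>b\<in>B. \<Sum>b'\<in>B. sc (Delta c (b, b')) (act b a * act b' a')))"
      using M by simp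
    also have "\<dots> = (\<Sum>c\<in>B. \<Sum>b\<in>B. \<Sum>b'\<in>B. sc (h c * Delta c (b, b')) (act b a * act b' a'))"
      by (simp add: sc_sumR sc_assoc)
    finally show "hact sc B act h (a * a') = (\<Sum>c\<in>B. \<Sum>b\<in>B. \<Sum>b'\<in>B. sc (h c * Delta c (b, b')) (act b a * act b' a'))" .
  qed
  have 3: "\<forall>h k a. hact sc B act h (hact sc B act k a) =
        (\<Sum>c\<in>B. \<Sum>b\<in>B. \<Sum>b'\<in>B. sc (h c * Delta c (b, b'))
            (act b 1 * hact sc B act (hmul B mu (basis_el b') k) a))"
  proof (intro allI)
    fix h k a
    have hm: "hact sc B act (hmul B mu (basis_el b') k) a = (\<Sum>d\<in>B. sc (k d) (\<Sum>e\<in>B. sc (mu b' d e) (act e a)))"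
      if b': "b' \<in> B" for b'
    proof -
      have "hact sc B act (hmul B mu (basis_el b') k) a = (\<Sum>e\<in>B. sc (\<Sum>d\<in>B. k d * mu b' d e) (act e a))"
        unfolding hmul_basis[OF fin b'] hact_def ..
      also have "\<dots> = (\<Sum>e\<in>B. \<Sum>d\<in>B. sc (k d) (sc (mu b' d e) (act e a)))"
        by (simp add: sc_sumL sc_assoc)
      also have "\<dots> = (\<Sum>d\<in>B. sc (k d) (\<Sum>e\<in>B. sc (mu b' d e) (act e a)))"
        by (subst sum.swap) (simp add: sc_sumR)
      finally show ?thesis .
    qed
    have sw: "(\<Sum>d\<in>B. \<Sum>b\<in>B. \<Sum>b'\<in>B. f d b b') = (\<Sum>b\<in>B. \<Sum>b'\<in>B. \<Sum>d\<in>B. f d b b')"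
      for f :: "_ \<Rightarrow> _ \<Rightarrow> _ \<Rightarrow> 'a"
    proof -
      have "(\<Sum>d\<in>B. \<Sum>b\<in>B. \<Sum>b'\<in>B. f d b b') = (\<Sum>b\<in>B. \<Sum>d\<in>B. \<Sum>b'\<in>B. f d b b')" by (rule sum.swap)
      also have "\<dots> = (\<Sum>b\<in>B. \<Sum>b'\<in>B. \<Sum>d\<in>B. f d b b')" by (rule sum.cong[OF refl], rule sum.swap)
      finally show ?thesis .
    qed
    have "hact sc B act h (hact sc B act k a) = (\<Sum>c\<in>B. sc (h c) (act c (\<Sum>d\<in>B. sc (k d) (act d a))))"
      unfolding hact_def ..
    also have "\<dots> = (\<Sum>c\<in>B. sc (h c) (\<Sum>d\<in>B. sc (k d) (act c (act d a))))"
      using lin by (intro sum.cong refl) (simp add: lin_sum lin_sc)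
    also have "\<dots> = (\<Sum>c\<in>B. sc (h c) (\<Sum>d\<in>B. sc (k d) (\<Sum>b\<in>B. \<Sum>b'\<in>B. sc (Delta c (b, b')) (act b 1 * (\<Sum>e\<in>B. sc (mu b' d e) (act e a))))))"
      using C by (intro sum.cong refl) simp
    also have "\<dots> = (\<Sum>c\<in>B. \<Sum>b\<in>B. \<Sum>b'\<in>B. \<Sum>d\<in>B. sc (h c) (sc (Delta c (b, b')) (sc (k d) (act b 1 * (\<Sum>e\<in>B. sc (mu b' d e) (act e a))))))"
    proof -
      have "(\<Sum>c\<in>B. sc (h c) (\<Sum>d\<in>B. sc (k d) (\<Sum>b\<in>B. \<Sum>b'\<in>B. sc (Delta c (b, b')) (act b 1 * (\<Sum>e\<in>B. sc (mu b' d e) (act e a))))))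
        = (\<Sum>c\<in>B. \<Sum>d\<in>B. \<Sum>b\<in>B. \<Sum>b'\<in>B. sc (h c) (sc (Delta c (b, b')) (sc (k d) (act b 1 * (\<Sum>e\<in>B. sc (mu b' d e) (act e a))))))"
        by (simp add: sc_sumR sc_comm[of "k _"])
      also have "\<dots> = (\<Sum>c\<in>B. \<Sum>b\<in>B. \<Sum>b'\<in>B. \<Sum>d\<in>B. sc (h c) (sc (Delta c (b, b')) (sc (k d) (act b 1 * (\<Sum>e\<in>B. sc (mu b' d e) (act e a))))))"
        by (rule sum.cong[OF refl], rule sw)
      finally show ?thesis .
    qed
    also have "\<dots> = (\<Sum>c\<in>B. \<Sum>b\<in>B. \<Sum>b'\<in>B. sc (h c * Delta c (b, b'))
            (act b 1 * hact sc B act (hmul B mu (basis_el b') k) a))"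
      by (intro sum.cong refl) (simp add: hm sc_assoc sc_sumR sum_distrib_left sc_mulR)
    finally show "hact sc B act h (hact sc B act k a) = (\<Sum>c\<in>B. \<Sum>b\<in>B. \<Sum>b'\<in>B. sc (h c * Delta c (b, b'))
            (act b 1 * hact sc B act (hmul B mu (basis_el b') k) a))" .
  qed
  show ?L unfolding partial_action_def using 1 2 3 by blast
qed

lemma global_iff:
  assumes fin: "finite B"
  shows "global_action sc B mu Delta one eps act \<longleftrightarrow>
    partial_action sc B mu Delta one act \<and> (\<forall>b\<in>B. act b 1 = sc (eps b) 1)"
proof -
  have "(\<forall>h. hact sc B act h 1 = sc (\<Sum>b\<in>B. h b * eps b) 1) \<longleftrightarrow> (\<forall>b\<in>B. act b 1 = sc (eps b) 1)"
  proof
    assume H: "\<forall>h. hact sc B act h 1 = sc (\<Sum>b\<in>B. h b * eps b) 1"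
    show "\<forall>b\<in>B. act b 1 = sc (eps b) 1"
    proof
      fix b assume b: "b \<in> B"
      have "act b 1 = hact sc B act (basis_el b) 1" using hact_basis[OF fin b] by simp
      also have "\<dots> = sc (\<Sum>b'\<in>B. basis_el b b' * eps b') 1" using H by blast
      also have "\<dots> = sc (eps b) 1" using b fin unfolding basis_el_def
        by (simp add: if_distrib[of "\<lambda>s. s * _"] sum.delta' cong: if_cong)
      finally show "act b 1 = sc (eps b) 1" .
    qed
  next
    assume H: "\<forall>b\<in>B. act b 1 = sc (eps b) 1"
    show "\<forall>h. hact sc B act h 1 = sc (\<Sum>b\<in>B. h b * eps b) 1"
      unfolding hact_def using H by (simp add: sc_sumL sc_assoc)
  qed
  thus ?thesis unfolding global_action_def by blast
qed

end


lemma mod_small2: "(m::nat) < 2 * n \<Longrightarrow> m mod n = (if m < n then m else m - n)"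
  by (metis le_mod_geq mod_if mod_less not_less mult_2 add_diff_cancel_right' less_diff_conv2)

locale taft = alg sc for sc :: "'k::field \<Rightarrow> 'a::ring_1 \<Rightarrow> 'a" +
  fixes n :: nat and q :: 'k and act :: "nat \<times> nat \<Rightarrow> 'a \<Rightarrow> 'a"
  assumes n2: "n \<ge> 2" and prim: "primitive_root n q"
    and lin: "\<forall>b\<in>taft_basis n. linear_map sc (act b)"
begin

abbreviation "BB \<equiv> taft_basis n"
abbreviation "TM \<equiv> tens_mul BB (taft_mu n q)"

lemma finB[simp]: "finite BB" unfolding taft_basis_def by simp
lemma memB[simp]: "(x \<in> BB) \<longleftrightarrow> fst x < n \<and> snd x < n" unfolding taft_basis_def by (cases x) auto

lemma sum_if_one: "finite S \<Longrightarrow> P \<in> S \<Longrightarrow> (\<Sum>p\<in>S. (if p = P then 1 else 0) * G p) = (G P :: 'b::semiring_1)"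
proof -
  assume "finite S" "P \<in> S"
  have "(\<Sum>p\<in>S. (if p = P then 1 else 0) * G p) = (\<Sum>p\<in>S. if p = P then G p else 0)"
    by (rule sum.cong) auto
  thus ?thesis using \<open>finite S\<close> \<open>P \<in> S\<close> by simp
qed

lemma tm_split: "tens_mul B mu X Y (c, c') = (\<Sum>p\<in>B \<times> B. X p * (\<Sum>p'\<in>B \<times> B. Y p' * mu (fst p) (fst p') c * mu (snd p) (snd p') c'))"
  unfolding tens_mul_def by (simp add: sum_distrib_left mult.assoc)

lemma Dg_step:
  assumes "k < n" "k' < n" "l < n" "l' < n"
  shows "TM (taft_Dg n) Y (((k + 1) mod n, l), ((k' + 1) mod n, l')) = Y ((k, l), (k', l'))"
proof -
  let ?P = "((1 mod n, 0::nat), (1 mod n, 0::nat))"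
  have PB: "?P \<in> BB \<times> BB" using n2 by simp
  have key: "\<And>a b k l. a < n \<Longrightarrow> k < n \<Longrightarrow> taft_mu n q (1 mod n, 0) (a, b) ((k + 1) mod n, l) = (if a = k \<and> b = l then 1 else 0)"
  proof -
    fix a b k l assume a: "a < n" and k: "k < n"
    have "((k + 1) mod n = (1 mod n + a) mod n) \<longleftrightarrow> a = k"
      using a k n2 by (auto simp: mod_small2 mod_add_left_eq[symmetric])
    thus "taft_mu n q (1 mod n, 0) (a, b) ((k + 1) mod n, l) = (if a = k \<and> b = l then 1 else 0)"
      unfolding taft_mu_def by auto
  qed
  have "TM (taft_Dg n) Y (((k + 1) mod n, l), ((k' + 1) mod n, l')) =
     (\<Sum>p\<in>BB \<times> BB. (if p = ?P then 1 else 0) * (\<Sum>p'\<in>BB \<times> BB. Y p' * taft_mu n q (fst p) (fst p') ((k + 1) mod n, l) * taft_mu n q (snd p) (snd p') ((k' + 1) mod n, l')))"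
    unfolding tm_split taft_Dg_def basis_el_def by (rule refl)
  also have "\<dots> = (\<Sum>p'\<in>BB \<times> BB. Y p' * taft_mu n q (1 mod n, 0) (fst p') ((k + 1) mod n, l) * taft_mu n q (1 mod n, 0) (snd p') ((k' + 1) mod n, l'))"
    using PB by (subst sum_if_one) auto
  also have "\<dots> = (\<Sum>p'\<in>BB \<times> BB. if p' = ((k, l), (k', l')) then Y ((k, l), (k', l')) else 0)"
  proof (rule sum.cong[OF refl])
    fix p' assume "p' \<in> BB \<times> BB"
    then obtain a b a' b' where p': "p' = ((a, b), (a', b'))" and ab: "a < n" "a' < n"
      by (cases p') auto
    show "Y p' * taft_mu n q (1 mod n, 0) (fst p') ((k + 1) mod n, l) * taft_mu n q (1 mod n, 0) (snd p') ((k' + 1) mod n, l') =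
        (if p' = ((k, l), (k', l')) then Y ((k, l), (k', l')) else 0)"
      unfolding p' using key[OF ab(1) assms(1), of b l] key[OF ab(2) assms(2), of b' l'] by auto
  qed
  also have "\<dots> = Y ((k, l), (k', l'))" using assms by simp
  finally show ?thesis .
qed

lemma Dg_iter:
  assumes "k < n" "k' < n" "l < n" "l' < n"
  shows "((TM (taft_Dg n)) ^^ i) Y (((k + i) mod n, l), ((k' + i) mod n, l')) = Y ((k, l), (k', l'))"
proof (induction i)
  case 0 thus ?case using assms by simp
next
  case (Suc i)
  have e1: "(k + Suc i) mod n = ((k + i) mod n + 1) mod n" by (simp add: mod_Suc_eq)
  have e2: "(k' + Suc i) mod n = ((k' + i) mod n + 1) mod n" by (simp add: mod_Suc_eq)
  have "((TM (taft_Dg n)) ^^ Suc i) Y (((k + Suc i) mod n, l), ((k' + Suc i) mod n, l'))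
      = TM (taft_Dg n) (((TM (taft_Dg n)) ^^ i) Y) ((((k + i) mod n + 1) mod n, l), (((k' + i) mod n + 1) mod n, l'))"
    by (simp only: e1 e2 funpow.simps comp_def)
  also have "\<dots> = ((TM (taft_Dg n)) ^^ i) Y (((k + i) mod n, l), ((k' + i) mod n, l'))"
    using n2 assms by (intro Dg_step) auto
  finally show ?case using Suc by simp
qed

lemma Dx_step:
  assumes "k1 < n" "k2 < n" "l1 < n" "l2 < n"
  shows "TM (taft_Dx n) Y ((k1, l1), (k2, l2)) =
     (if 1 \<le> l1 then Y ((k1, l1 - 1), (k2, l2)) * q ^ k1 else 0) +
     (if 1 \<le> l2 then Y (((k1 + n - 1) mod n, l1), (k2, l2 - 1)) * q ^ k2 else 0)"
proof -
  let ?P1 = "((0::nat, 1::nat), (0::nat, 0::nat))"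
  let ?P2 = "((1 mod n, 0::nat), (0::nat, 1::nat))"
  have P1B: "?P1 \<in> BB \<times> BB" and P2B: "?P2 \<in> BB \<times> BB" using n2 by auto
  have ne: "?P1 \<noteq> ?P2" by simp
  define F where "F p = (\<Sum>p'\<in>BB \<times> BB. Y p' * taft_mu n q (fst p) (fst p') (k1, l1) * taft_mu n q (snd p) (snd p') (k2, l2))" for p
  have "TM (taft_Dx n) Y ((k1, l1), (k2, l2)) = (\<Sum>p\<in>BB \<times> BB. ((if p = ?P1 then 1 else 0) + (if p = ?P2 then 1 else 0)) * F p)"
    unfolding tm_split taft_Dx_def F_def by simp
  also have "\<dots> = (\<Sum>p\<in>BB \<times> BB. (if p = ?P1 then F p else 0)) + (\<Sum>p\<in>BB \<times> BB. (if p = ?P2 then F p else 0))"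
    by (simp add: distrib_right sum.distrib if_distrib[of "\<lambda>x. x * _"] cong: if_cong)
  also have "\<dots> = F ?P1 + F ?P2" using P1B P2B by (simp only: sum.delta sum.delta' finB finite_SigmaI) simp
  also have "F ?P1 = (if 1 \<le> l1 then Y ((k1, l1 - 1), (k2, l2)) * q ^ k1 else 0)"
  proof -
    have "F ?P1 = (\<Sum>p'\<in>BB \<times> BB. if p' = ((k1, l1 - 1), (k2, l2)) \<and> 1 \<le> l1 then Y ((k1, l1 - 1), (k2, l2)) * q ^ k1 else 0)"
      unfolding F_def
    proof (rule sum.cong[OF refl])
      fix p' assume "p' \<in> BB \<times> BB"
      then obtain a b a' b' where p': "p' = ((a, b), (a', b'))" and ab: "a < n" "a' < n"
        by (cases p') auto
      have m1: "taft_mu n q (0, 1) (a, b) (k1, l1) = (if a = k1 \<and> b = l1 - 1 \<and> 1 \<le> l1 then q ^ k1 else 0)"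
        unfolding taft_mu_def using ab by auto
      have m2: "taft_mu n q (0, 0) (a', b') (k2, l2) = (if a' = k2 \<and> b' = l2 then 1 else 0)"
        unfolding taft_mu_def using ab by auto
      show "Y p' * taft_mu n q (fst ?P1) (fst p') (k1, l1) * taft_mu n q (snd ?P1) (snd p') (k2, l2) =
        (if p' = ((k1, l1 - 1), (k2, l2)) \<and> 1 \<le> l1 then Y ((k1, l1 - 1), (k2, l2)) * q ^ k1 else 0)"
        unfolding p' fst_conv snd_conv m1 m2 by auto
    qed
    also have "\<dots> = (if 1 \<le> l1 then Y ((k1, l1 - 1), (k2, l2)) * q ^ k1 else 0)"
      using assms by (cases "1 \<le> l1") (auto simp: sum.delta sum.delta')
    finally show ?thesis .
  qed
  also have "F ?P2 = (if 1 \<le> l2 then Y (((k1 + n - 1) mod n, l1), (k2, l2 - 1)) * q ^ k2 else 0)"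
  proof -
    have key: "a < n \<Longrightarrow> (k1 = (1 mod n + a) mod n) \<longleftrightarrow> a = (k1 + n - 1) mod n" for a
      using assms n2 by (auto simp: mod_small2 mod_add_left_eq[symmetric])
    have "F ?P2 = (\<Sum>p'\<in>BB \<times> BB. if p' = (((k1 + n - 1) mod n, l1), (k2, l2 - 1)) \<and> 1 \<le> l2 then Y (((k1 + n - 1) mod n, l1), (k2, l2 - 1)) * q ^ k2 else 0)"
      unfolding F_def
    proof (rule sum.cong[OF refl])
      fix p' assume "p' \<in> BB \<times> BB"
      then obtain a b a' b' where p': "p' = ((a, b), (a', b'))" and ab: "a < n" "a' < n"
        by (cases p') auto
      have m1: "taft_mu n q (1 mod n, 0) (a, b) (k1, l1) = (if a = (k1 + n - 1) mod n \<and> b = l1 then 1 else 0)"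
        unfolding taft_mu_def using key[OF ab(1)] by auto
      have m2: "taft_mu n q (0, 1) (a', b') (k2, l2) = (if a' = k2 \<and> b' = l2 - 1 \<and> 1 \<le> l2 then q ^ k2 else 0)"
        unfolding taft_mu_def using ab by auto
      show "Y p' * taft_mu n q (fst ?P2) (fst p') (k1, l1) * taft_mu n q (snd ?P2) (snd p') (k2, l2) =
        (if p' = (((k1 + n - 1) mod n, l1), (k2, l2 - 1)) \<and> 1 \<le> l2 then Y (((k1 + n - 1) mod n, l1), (k2, l2 - 1)) * q ^ k2 else 0)"
        unfolding p' fst_conv snd_conv m1 m2 by auto
    qed
    also have "\<dots> = (if 1 \<le> l2 then Y (((k1 + n - 1) mod n, l1), (k2, l2 - 1)) * q ^ k2 else 0)"
      using assms n2 by (cases "1 \<le> l2") (auto simp: sum.delta sum.delta')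
    finally show ?thesis .
  qed
  finally show ?thesis .
qed

end


context taft
begin

lemma Dx_iter:
  assumes "a < n" "b < n" "l1 < n" "l2 < n"
  shows "((TM (taft_Dx n)) ^^ j) (basis_el ((0, 0), (0, 0))) ((a, l1), (b, l2)) =
    (if b = 0 \<and> l1 + l2 = j \<and> a = l2 then qbinom q j l2 else 0)"
  using assms
proof (induction j arbitrary: a b l1 l2)
  case 0 thus ?case unfolding basis_el_def by auto
next
  case (Suc j)
  let ?X = "((TM (taft_Dx n)) ^^ j) (basis_el ((0, 0), (0, 0)))"
  have "((TM (taft_Dx n)) ^^ Suc j) (basis_el ((0, 0), (0, 0))) ((a, l1), (b, l2)) = TM (taft_Dx n) ?X ((a, l1), (b, l2))"
    by simp
  also have "\<dots> = (if 1 \<le> l1 then ?X ((a, l1 - 1), (b, l2)) * q ^ a else 0) +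
     (if 1 \<le> l2 then ?X (((a + n - 1) mod n, l1), (b, l2 - 1)) * q ^ b else 0)"
    using Suc.prems by (rule Dx_step)
  also have "\<dots> = (if b = 0 \<and> l1 + l2 = Suc j \<and> a = l2 then qbinom q (Suc j) l2 else 0)"
  proof -
    have X1: "1 \<le> l1 \<Longrightarrow> ?X ((a, l1 - 1), (b, l2)) = (if b = 0 \<and> l1 - 1 + l2 = j \<and> a = l2 then qbinom q j l2 else 0)"
      using Suc by simp
    have m: "1 \<le> l2 \<Longrightarrow> ((a + n - 1) mod n = l2 - 1) \<longleftrightarrow> a = l2"
      using Suc.prems n2 by (auto simp: mod_small2)
    have X2: "1 \<le> l2 \<Longrightarrow> ?X (((a + n - 1) mod n, l1), (b, l2 - 1)) = (if b = 0 \<and> l1 + (l2 - 1) = j \<and> a = l2 then qbinom q j (l2 - 1) else 0)"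
      using Suc.IH[of "(a + n - 1) mod n" b l1 "l2 - 1"] Suc.prems n2 m by simp
    show ?thesis
    proof (cases "b = 0 \<and> l1 + l2 = Suc j \<and> a = l2")
      case False
      thus ?thesis using X1 X2 by auto
    next
      case True
      hence b0: "b = 0" and s: "l1 + l2 = Suc j" and al: "a = l2" by auto
      show ?thesis
      proof (cases l2)
        case 0
        thus ?thesis using X1 s b0 al by simp
      next
        case (Suc m)
        show ?thesis
        proof (cases l1)
          case 0
          hence "m = j" using s Suc by simp
          thus ?thesis using X2 0 Suc b0 al s by (simp add: qbinom_Suc_Suc qbinom_gt)
        next
          case (Suc m')
          thus ?thesis using X1 X2 \<open>l2 = Suc m\<close> b0 al s by (simp add: qbinom_Suc_Suc algebra_simps)
        qed
      qed
    qed
  qed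
  finally show ?case .
qed

lemma Delta_closed:
  assumes "i < n" "a1 < n" "a2 < n" "l1 < n" "l2 < n"
  shows "taft_Delta n q (i, j) ((a1, l1), (a2, l2)) = (if a2 = i \<and> l1 + l2 = j \<and> a1 = (i + l2) mod n then qbinom q j l2 else 0)"
proof -
  define k1 where "k1 = (a1 + n - i) mod n"
  define k2 where "k2 = (a2 + n - i) mod n"
  have k1n: "k1 < n" and k2n: "k2 < n" using n2 unfolding k1_def k2_def by auto
  have a1e: "a1 = (k1 + i) mod n" unfolding k1_def using assms by (auto simp: mod_small2)
  have a2e: "a2 = (k2 + i) mod n" unfolding k2_def using assms by (auto simp: mod_small2)
  have c2: "k2 = 0 \<longleftrightarrow> a2 = i" unfolding k2_def using assms by (auto simp: mod_small2)
  have c1: "k1 = l2 \<longleftrightarrow> a1 = (i + l2) mod n" unfolding k1_def using assms by (auto simp: mod_small2)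
  have "taft_Delta n q (i, j) ((a1, l1), (a2, l2)) =
     ((TM (taft_Dg n)) ^^ i) (((TM (taft_Dx n)) ^^ j) (basis_el ((0, 0), (0, 0)))) (((k1 + i) mod n, l1), ((k2 + i) mod n, l2))"
    unfolding taft_Delta_def using a1e a2e by simp
  also have "\<dots> = ((TM (taft_Dx n)) ^^ j) (basis_el ((0, 0), (0, 0))) ((k1, l1), (k2, l2))"
    using k1n k2n assms by (intro Dg_iter) auto
  also have "\<dots> = (if k2 = 0 \<and> l1 + l2 = j \<and> k1 = l2 then qbinom q j l2 else 0)"
    using k1n k2n assms by (intro Dx_iter) auto
  finally show ?thesis using c1 c2 by simp
qed

lemma sum_Delta:
  assumes i: "i < n" and j: "j < n"
  shows "(\<Sum>b\<in>BB. \<Sum>b'\<in>BB. sc (taft_Delta n q (i, j) (b, b')) (\<Phi> b b')) =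
    (\<Sum>k = 0..j. sc (qbinom q j k) (\<Phi> ((i + k) mod n, j - k) (i, k)))"
proof -
  have inner: "(\<Sum>b\<in>BB. sc (taft_Delta n q (i, j) (b, (a2, l2))) (\<Phi> b (a2, l2))) =
      (if a2 = i \<and> l2 \<le> j then sc (qbinom q j l2) (\<Phi> ((i + l2) mod n, j - l2) (i, l2)) else 0)"
    if a2: "a2 < n" and l2: "l2 < n" for a2 l2
  proof -
    have "(\<Sum>b\<in>BB. sc (taft_Delta n q (i, j) (b, (a2, l2))) (\<Phi> b (a2, l2))) =
      (\<Sum>b\<in>BB. if b = ((i + l2) mod n, j - l2) then (if a2 = i \<and> l2 \<le> j then sc (qbinom q j l2) (\<Phi> ((i + l2) mod n, j - l2) (i, l2)) else 0) else 0)"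
    proof (rule sum.cong[OF refl])
      fix b assume "b \<in> BB"
      then obtain a1 l1 where b: "b = (a1, l1)" and "a1 < n" "l1 < n" by (cases b) auto
      thus "sc (taft_Delta n q (i, j) (b, (a2, l2))) (\<Phi> b (a2, l2)) =
        (if b = ((i + l2) mod n, j - l2) then (if a2 = i \<and> l2 \<le> j then sc (qbinom q j l2) (\<Phi> ((i + l2) mod n, j - l2) (i, l2)) else 0) else 0)"
        using Delta_closed[OF i _ a2 _ l2, of a1 l1] by auto
    qed
    also have "\<dots> = (if a2 = i \<and> l2 \<le> j then sc (qbinom q j l2) (\<Phi> ((i + l2) mod n, j - l2) (i, l2)) else 0)"
      using j n2 by (auto simp: sum.delta sum.delta')
    finally show ?thesis .
  qed
  have "(\<Sum>b\<in>BB. \<Sum>b'\<in>BB. sc (taft_Delta n q (i, j) (b, b')) (\<Phi> b b')) =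
      (\<Sum>b'\<in>BB. \<Sum>b\<in>BB. sc (taft_Delta n q (i, j) (b, b')) (\<Phi> b b'))"
    by (rule sum.swap)
  also have "\<dots> = (\<Sum>b'\<in>{..<n} \<times> {..<n}. if fst b' = i \<and> snd b' \<le> j then sc (qbinom q j (snd b')) (\<Phi> ((i + snd b') mod n, j - snd b') (i, snd b')) else 0)"
    unfolding taft_basis_def
    by (rule sum.cong[OF refl]) (auto simp: inner[unfolded taft_basis_def])
  also have "\<dots> = (\<Sum>a2<n. \<Sum>l2<n. if a2 = i \<and> l2 \<le> j then sc (qbinom q j l2) (\<Phi> ((i + l2) mod n, j - l2) (i, l2)) else 0)"
    by (simp add: sum.cartesian_product split_def)
  also have "\<dots> = (\<Sum>l2<n. if l2 \<le> j then sc (qbinom q j l2) (\<Phi> ((i + l2) mod n, j - l2) (i, l2)) else 0)"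
  proof -
    have "(\<Sum>a2<n. \<Sum>l2<n. if a2 = i \<and> l2 \<le> j then sc (qbinom q j l2) (\<Phi> ((i + l2) mod n, j - l2) (i, l2)) else 0)
      = (\<Sum>a2<n. if a2 = i then (\<Sum>l2<n. if l2 \<le> j then sc (qbinom q j l2) (\<Phi> ((i + l2) mod n, j - l2) (i, l2)) else 0) else 0)"
      by (rule sum.cong[OF refl]) auto
    thus ?thesis using i by (simp add: sum.delta sum.delta')
  qed
  also have "\<dots> = (\<Sum>k = 0..j. sc (qbinom q j k) (\<Phi> ((i + k) mod n, j - k) (i, k)))"
  proof -
    have "{l2\<in>{..<n}. l2 \<le> j} = {0..j}" using j by auto
    thus ?thesis by (simp add: sum.inter_filter[symmetric])
  qed
  finally show ?thesis .
qed

lemma sum_mu: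
  assumes "i < n" "k < n" "i' < n" "j' < n"
  shows "(\<Sum>e\<in>BB. sc (taft_mu n q (i, k) (i', j') e) (f e)) =
    (if k + j' < n then sc (q ^ (k * i')) (f ((i + i') mod n, k + j')) else 0)"
proof -
  have "(\<Sum>e\<in>BB. sc (taft_mu n q (i, k) (i', j') e) (f e)) =
     (\<Sum>e\<in>BB. if e = ((i + i') mod n, k + j') then sc (q ^ (k * i')) (f ((i + i') mod n, k + j')) else 0)"
    by (rule sum.cong[OF refl]) (auto simp: taft_mu_def)
  also have "\<dots> = (if k + j' < n then sc (q ^ (k * i')) (f ((i + i') mod n, k + j')) else 0)"
    using n2 by (simp add: sum.delta sum.delta')
  finally show ?thesis .
qed

end


context taft
begin

lemma partial_T_iff:
  "partial_action sc BB (taft_mu n q) (taft_Delta n q) (basis_el (0, 0)) act \<longleftrightarrow>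
   (\<forall>a. act (0, 0) a = a) \<and>
   (\<forall>i<n. \<forall>j<n. \<forall>a a'. act (i, j) (a * a') =
      (\<Sum>k = 0..j. sc (qbinom q j k) (act ((i + k) mod n, j - k) a * act (i, k) a'))) \<and>
   (\<forall>i<n. \<forall>j<n. \<forall>i'<n. \<forall>j'<n. \<forall>a. act (i, j) (act (i', j') a) =
      (\<Sum>k = 0..j. sc (qbinom q j k) (act ((i + k) mod n, j - k) 1 *
          (if k + j' < n then sc (q ^ (k * i')) (act ((i + i') mod n, k + j') a) else 0))))"
proof -
  have b0: "(0, 0) \<in> BB" using n2 by simp
  have M: "(\<forall>c\<in>BB. \<forall>a a'. act c (a * a') = (\<Sum>b\<in>BB. \<Sum>b'\<in>BB. sc (taft_Delta n q c (b, b')) (act b a * act b' a')))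
     \<longleftrightarrow> (\<forall>i<n. \<forall>j<n. \<forall>a a'. act (i, j) (a * a') =
      (\<Sum>k = 0..j. sc (qbinom q j k) (act ((i + k) mod n, j - k) a * act (i, k) a')))"
  proof -
    have "(\<forall>c\<in>BB. \<forall>a a'. act c (a * a') = (\<Sum>b\<in>BB. \<Sum>b'\<in>BB. sc (taft_Delta n q c (b, b')) (act b a * act b' a')))
      \<longleftrightarrow> (\<forall>i<n. \<forall>j<n. \<forall>a a'. act (i, j) (a * a') = (\<Sum>b\<in>BB. \<Sum>b'\<in>BB. sc (taft_Delta n q (i, j) (b, b')) (act b a * act b' a')))"
      by auto
    also have "\<dots> \<longleftrightarrow> (\<forall>i<n. \<forall>j<n. \<forall>a a'. act (i, j) (a * a') =
      (\<Sum>k = 0..j. sc (qbinom q j k) (act ((i + k) mod n, j - k) a * act (i, k) a')))"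
      by (simp add: sum_Delta)
    finally show ?thesis .
  qed
  have C: "(\<forall>c\<in>BB. \<forall>d\<in>BB. \<forall>a. act c (act d a) =
        (\<Sum>b\<in>BB. \<Sum>b'\<in>BB. sc (taft_Delta n q c (b, b')) (act b 1 * (\<Sum>e\<in>BB. sc (taft_mu n q b' d e) (act e a)))))
     \<longleftrightarrow> (\<forall>i<n. \<forall>j<n. \<forall>i'<n. \<forall>j'<n. \<forall>a. act (i, j) (act (i', j') a) =
      (\<Sum>k = 0..j. sc (qbinom q j k) (act ((i + k) mod n, j - k) 1 *
          (if k + j' < n then sc (q ^ (k * i')) (act ((i + i') mod n, k + j') a) else 0))))"
  proof -
    have "(\<forall>c\<in>BB. \<forall>d\<in>BB. \<forall>a. act c (act d a) =
        (\<Sum>b\<in>BB. \<Sum>b'\<in>BB. sc (taft_Delta n q c (b, b')) (act b 1 * (\<Sum>e\<in>BB. sc (taft_mu n q b' d e) (act e a)))))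
      \<longleftrightarrow> (\<forall>i<n. \<forall>j<n. \<forall>i'<n. \<forall>j'<n. \<forall>a. act (i, j) (act (i', j') a) =
        (\<Sum>b\<in>BB. \<Sum>b'\<in>BB. sc (taft_Delta n q (i, j) (b, b')) (act b 1 * (\<Sum>e\<in>BB. sc (taft_mu n q b' (i', j') e) (act e a)))))"
      by auto
    also have "\<dots> \<longleftrightarrow> (\<forall>i<n. \<forall>j<n. \<forall>i'<n. \<forall>j'<n. \<forall>a. act (i, j) (act (i', j') a) =
      (\<Sum>k = 0..j. sc (qbinom q j k) (act ((i + k) mod n, j - k) 1 *
          (if k + j' < n then sc (q ^ (k * i')) (act ((i + i') mod n, k + j') a) else 0))))"
    proof -
      have "(\<Sum>b\<in>BB. \<Sum>b'\<in>BB. sc (taft_Delta n q (i, j) (b, b')) (act b 1 * (\<Sum>e\<in>BB. sc (taft_mu n q b' (i', j') e) (act e a))))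
        = (\<Sum>k = 0..j. sc (qbinom q j k) (act ((i + k) mod n, j - k) 1 *
          (if k + j' < n then sc (q ^ (k * i')) (act ((i + i') mod n, k + j') a) else 0)))"
        if "i < n" "j < n" "i' < n" "j' < n" for i j i' j' a
      proof -
        have "(\<Sum>b\<in>BB. \<Sum>b'\<in>BB. sc (taft_Delta n q (i, j) (b, b')) (act b 1 * (\<Sum>e\<in>BB. sc (taft_mu n q b' (i', j') e) (act e a))))
          = (\<Sum>k = 0..j. sc (qbinom q j k) (act ((i + k) mod n, j - k) 1 * (\<Sum>e\<in>BB. sc (taft_mu n q (i, k) (i', j') e) (act e a))))"
          by (rule sum_Delta[OF that(1,2)])
        also have "\<dots> = (\<Sum>k = 0..j. sc (qbinom q j k) (act ((i + k) mod n, j - k) 1 *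
          (if k + j' < n then sc (q ^ (k * i')) (act ((i + i') mod n, k + j') a) else 0)))"
          using that by (intro sum.cong refl) (simp add: sum_mu)
        finally show ?thesis .
      qed
      thus ?thesis by auto
    qed
    finally show ?thesis .
  qed
  show ?thesis
    unfolding partial_iff[OF finB b0 lin] M C by simp
qed

lemma partial_Cn_iff:
  "partial_action sc {..<n} (cn_mu n) cn_Delta (basis_el 0) (\<lambda>i. act (i, 0)) \<longleftrightarrow>
   (\<forall>a. act (0, 0) a = a) \<and>
   (\<forall>i<n. \<forall>a a'. act (i, 0) (a * a') = act (i, 0) a * act (i, 0) a') \<and>
   (\<forall>i<n. \<forall>i'<n. \<forall>a. act (i, 0) (act (i', 0) a) = act (i, 0) 1 * act ((i + i') mod n, 0) a)"
proof -
  have b0: "(0::nat) \<in> {..<n}" using n2 by simp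
  have linC: "\<forall>b\<in>{..<n}. linear_map sc (act (b, 0))" using lin n2 by auto
  have sD: "(\<Sum>b<n. \<Sum>b'<n. sc (cn_Delta c (b, b')) (\<Phi> b b')) = \<Phi> c c" if "c < n" for c and \<Phi> :: "nat \<Rightarrow> nat \<Rightarrow> 'a"
  proof -
    have "(\<Sum>b<n. \<Sum>b'<n. sc (cn_Delta c (b, b')) (\<Phi> b b')) = (\<Sum>b<n. if b = c then (\<Sum>b'<n. if b' = c then \<Phi> c c else 0) else 0)"
      unfolding cn_Delta_def by (intro sum.cong refl) (auto simp: if_distrib[of "\<lambda>s. sc s _"] cong: if_cong)
    thus ?thesis using that by simp
  qed
  have sM: "(\<Sum>e<n. sc (cn_mu n b' d e) (f e)) = f ((b' + d) mod n)" for b' d and f :: "nat \<Rightarrow> 'a"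
  proof -
    have "(\<Sum>e<n. sc (cn_mu n b' d e) (f e)) = (\<Sum>e<n. if e = (b' + d) mod n then f ((b' + d) mod n) else 0)"
      unfolding cn_mu_def by (intro sum.cong refl) auto
    thus ?thesis using n2 by simp
  qed
  show ?thesis
    unfolding partial_iff[OF finite_lessThan b0 linC] by (auto simp: sD sM)
qed

lemma global_T_iff:
  "global_action sc BB (taft_mu n q) (taft_Delta n q) (basis_el (0, 0)) taft_eps act \<longleftrightarrow>
   partial_action sc BB (taft_mu n q) (taft_Delta n q) (basis_el (0, 0)) act \<and>
   (\<forall>i<n. \<forall>j<n. act (i, j) 1 = (if j = 0 then 1 else 0))"
  unfolding global_iff[OF finB] taft_eps_def by auto

end


context taft
begin

definition P :: "nat \<Rightarrow> nat \<Rightarrow> 'a \<Rightarrow> 'a" where "P m l a = act (m mod n, l) a"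
definition cx :: 'a where "cx = act (0, 1) 1"
abbreviation "p \<equiv> inverse q"

lemma qn: "q ^ n = 1" using prim unfolding primitive_root_def by blast
lemma qm: "0 < m \<Longrightarrow> m < n \<Longrightarrow> q ^ m \<noteq> 1" using prim unfolding primitive_root_def by blast
lemma q0: "q \<noteq> 0" using qn n2 by (metis not_numeral_le_zero power_0_left zero_neq_one le_zero_eq)
lemma pn: "p ^ n = 1" using qn by (metis power_inverse inverse_1)
lemma qp[simp]: "q * p = 1" using q0 by simp
lemma pq[simp]: "p * q = 1" using q0 by simp
lemma q_mod: "q ^ (a mod n) = q ^ a"
proof -
  have "q ^ a = q ^ (n * (a div n) + a mod n)" by (simp only: mult_div_mod_eq)
  also have "\<dots> = q ^ (a mod n)" by (simp only: power_add power_mult qn power_one mult_1_left)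
  finally show ?thesis by simp
qed
lemma p_mod: "p ^ (a mod n) = p ^ a"
  using q_mod by (metis power_inverse)

lemma P_mod[simp]: "P (m mod n) l a = P m l a" unfolding P_def by simp
lemma P_n[simp]: "P (m + n) l a = P m l a" unfolding P_def by simp
lemma P_n'[simp]: "P (n + m) l a = P m l a" unfolding P_def by simp
lemma P_lin: "l < n \<Longrightarrow> linear_map sc (P m l)"
proof -
  assume "l < n"
  hence "(m mod n, l) \<in> BB" using n2 by simp
  hence "linear_map sc (act (m mod n, l))" using lin by blast
  moreover have "P m l = act (m mod n, l)" unfolding P_def by auto
  ultimately show ?thesis by simp
qed
lemma P_add: "l < n \<Longrightarrow> P m l (x + y) = P m l x + P m l y" using P_lin lin_add by blast
lemma P_sc: "l < n \<Longrightarrow> P m l (sc s x) = sc s (P m l x)" using P_lin lin_sc by blast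
lemma P_0: "l < n \<Longrightarrow> P m l 0 = 0" using P_lin lin_0 by blast
lemma P_diff: "l < n \<Longrightarrow> P m l (x - y) = P m l x - P m l y" using P_lin lin_diff by blast
lemma P_sum: "l < n \<Longrightarrow> P m l (\<Sum>i\<in>I. g i) = (\<Sum>i\<in>I. P m l (g i))" using P_lin lin_sum by blast

definition UU where "UU \<longleftrightarrow> (\<forall>a. P 0 0 a = a)"
definition MM where "MM \<longleftrightarrow> (\<forall>m j a a'. j < n \<longrightarrow> P m j (a * a') =
      (\<Sum>k = 0..j. sc (qbinom q j k) (P (m + k) (j - k) a * P m k a')))"
definition CC where "CC \<longleftrightarrow> (\<forall>m j m' j' a. j < n \<longrightarrow> j' < n \<longrightarrow> P m j (P m' j' a) =
      (\<Sum>k = 0..j. sc (qbinom q j k) (P (m + k) (j - k) 1 *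
          (if k + j' < n then sc (q ^ (k * m')) (P (m + m') (k + j') a) else 0))))"

lemma partial_P_iff:
  "partial_action sc BB (taft_mu n q) (taft_Delta n q) (basis_el (0, 0)) act \<longleftrightarrow> UU \<and> MM \<and> CC"
proof -
  have U: "(\<forall>a. act (0, 0) a = a) \<longleftrightarrow> UU" unfolding UU_def P_def by simp
  have M: "(\<forall>i<n. \<forall>j<n. \<forall>a a'. act (i, j) (a * a') =
      (\<Sum>k = 0..j. sc (qbinom q j k) (act ((i + k) mod n, j - k) a * act (i, k) a'))) \<longleftrightarrow> MM"
  proof
    assume H: "\<forall>i<n. \<forall>j<n. \<forall>a a'. act (i, j) (a * a') =
      (\<Sum>k = 0..j. sc (qbinom q j k) (act ((i + k) mod n, j - k) a * act (i, k) a'))"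
    show MM unfolding MM_def
    proof (intro allI impI)
      fix m j a a' assume j: "j < n"
      have "m mod n < n" using n2 by simp
      from H[rule_format, OF this j, of a a'] show "P m j (a * a') = (\<Sum>k = 0..j. sc (qbinom q j k) (P (m + k) (j - k) a * P m k a'))"
        unfolding P_def by (simp add: mod_add_left_eq)
    qed
  next
    assume H: MM
    show "\<forall>i<n. \<forall>j<n. \<forall>a a'. act (i, j) (a * a') =
      (\<Sum>k = 0..j. sc (qbinom q j k) (act ((i + k) mod n, j - k) a * act (i, k) a'))"
    proof (intro allI impI)
      fix i j a a' assume ij: "i < n" "j < n"
      show "act (i, j) (a * a') = (\<Sum>k = 0..j. sc (qbinom q j k) (act ((i + k) mod n, j - k) a * act (i, k) a'))"
        using H[unfolded MM_def P_def, rule_format, of j i a a'] ij by simp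
    qed
  qed
  have C: "(\<forall>i<n. \<forall>j<n. \<forall>i'<n. \<forall>j'<n. \<forall>a. act (i, j) (act (i', j') a) =
      (\<Sum>k = 0..j. sc (qbinom q j k) (act ((i + k) mod n, j - k) 1 *
          (if k + j' < n then sc (q ^ (k * i')) (act ((i + i') mod n, k + j') a) else 0)))) \<longleftrightarrow> CC"
  proof
    assume H: "\<forall>i<n. \<forall>j<n. \<forall>i'<n. \<forall>j'<n. \<forall>a. act (i, j) (act (i', j') a) =
      (\<Sum>k = 0..j. sc (qbinom q j k) (act ((i + k) mod n, j - k) 1 *
          (if k + j' < n then sc (q ^ (k * i')) (act ((i + i') mod n, k + j') a) else 0)))"
    show CC unfolding CC_def
    proof (intro allI impI)
      fix m j m' j' a assume j: "j < n" and j': "j' < n"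
      have mn: "m mod n < n" "m' mod n < n" using n2 by auto
      have qq: "q ^ (k * (m' mod n)) = q ^ (k * m')" for k
        by (metis mult.commute power_mult q_mod)
      have mm: "(m mod n + m' mod n) mod n = (m + m') mod n" by (simp add: mod_add_eq)
      from H[rule_format, OF mn(1) j mn(2) j', of a]
      show "P m j (P m' j' a) = (\<Sum>k = 0..j. sc (qbinom q j k) (P (m + k) (j - k) 1 *
          (if k + j' < n then sc (q ^ (k * m')) (P (m + m') (k + j') a) else 0)))"
        unfolding P_def qq mm by (simp add: mod_add_left_eq)
    qed
  next
    assume H: CC
    show "\<forall>i<n. \<forall>j<n. \<forall>i'<n. \<forall>j'<n. \<forall>a. act (i, j) (act (i', j') a) =
      (\<Sum>k = 0..j. sc (qbinom q j k) (act ((i + k) mod n, j - k) 1 *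
          (if k + j' < n then sc (q ^ (k * i')) (act ((i + i') mod n, k + j') a) else 0)))"
    proof (intro allI impI)
      fix i j i' j' a assume ij: "i < n" "j < n" "i' < n" "j' < n"
      show "act (i, j) (act (i', j') a) =
      (\<Sum>k = 0..j. sc (qbinom q j k) (act ((i + k) mod n, j - k) 1 *
          (if k + j' < n then sc (q ^ (k * i')) (act ((i + i') mod n, k + j') a) else 0)))"
        using H[unfolded CC_def P_def, rule_format, of j j' i i' a] ij by simp
    qed
  qed
  show ?thesis unfolding partial_T_iff U M C ..
qed

definition MC where "MC \<longleftrightarrow> (\<forall>m a a'. P m 0 (a * a') = P m 0 a * P m 0 a')"
definition CCn where "CCn \<longleftrightarrow> (\<forall>m m' a. P m 0 (P m' 0 a) = P m 0 1 * P (m + m') 0 a)"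

lemma partial_Cn_P_iff:
  "partial_action sc {..<n} (cn_mu n) cn_Delta (basis_el 0) (\<lambda>i. act (i, 0)) \<longleftrightarrow> UU \<and> MC \<and> CCn"
proof -
  have "(\<forall>i<n. \<forall>a a'. act (i, 0) (a * a') = act (i, 0) a * act (i, 0) a') \<longleftrightarrow> MC"
  proof
    assume H: "\<forall>i<n. \<forall>a a'. act (i, 0) (a * a') = act (i, 0) a * act (i, 0) a'"
    show MC unfolding MC_def P_def
    proof (intro allI)
      fix m a a'
      have "m mod n < n" using n2 by simp
      thus "act (m mod n, 0) (a * a') = act (m mod n, 0) a * act (m mod n, 0) a'" using H by blast
    qed
  next
    assume H: MC
    show "\<forall>i<n. \<forall>a a'. act (i, 0) (a * a') = act (i, 0) a * act (i, 0) a'"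
    proof (intro allI impI)
      fix i a a' assume "i < n"
      thus "act (i, 0) (a * a') = act (i, 0) a * act (i, 0) a'" using H[unfolded MC_def P_def, rule_format, of i a a'] by simp
    qed
  qed
  moreover have "(\<forall>i<n. \<forall>i'<n. \<forall>a. act (i, 0) (act (i', 0) a) = act (i, 0) 1 * act ((i + i') mod n, 0) a) \<longleftrightarrow> CCn"
  proof
    assume H: "\<forall>i<n. \<forall>i'<n. \<forall>a. act (i, 0) (act (i', 0) a) = act (i, 0) 1 * act ((i + i') mod n, 0) a"
    show CCn unfolding CCn_def P_def
    proof (intro allI)
      fix m m' a
      have mn: "m mod n < n" "m' mod n < n" using n2 by auto
      show "act (m mod n, 0) (act (m' mod n, 0) a) = act (m mod n, 0) 1 * act ((m + m') mod n, 0) a"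
        using H[rule_format, OF mn, of a] by (simp add: mod_add_eq)
    qed
  next
    assume H: CCn
    show "\<forall>i<n. \<forall>i'<n. \<forall>a. act (i, 0) (act (i', 0) a) = act (i, 0) 1 * act ((i + i') mod n, 0) a"
    proof (intro allI impI)
      fix i i' a assume "i < n" "i' < n"
      thus "act (i, 0) (act (i', 0) a) = act (i, 0) 1 * act ((i + i') mod n, 0) a"
        using H[unfolded CCn_def P_def, rule_format, of i i' a] by simp
    qed
  qed
  moreover have "(\<forall>a. act (0, 0) a = a) \<longleftrightarrow> UU" unfolding UU_def P_def by simp
  ultimately show ?thesis unfolding partial_Cn_iff by blast
qed

end


lemma sum01: "(\<Sum>k = 0..1. f k) = f 0 + f (1::nat)"
  by (simp add: numeral_eq_Suc)

locale taftc = taft +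
  assumes cen: "\<forall>a. act (0, 1) 1 * a = a * act (0, 1) 1"
begin

lemma P01: "P 0 1 1 = cx" unfolding P_def cx_def using n2 by simp

lemma MM0: "MM \<Longrightarrow> P m 0 (a * a') = P m 0 a * P m 0 a'"
  unfolding MM_def using n2 by auto

lemma MM1: "MM \<Longrightarrow> P m 1 (a * a') = P m 1 a * P m 0 a' + P (m + 1) 0 a * P m 1 a'"
  unfolding MM_def using n2 by (auto simp: sum01)

lemma CC0: "CC \<Longrightarrow> j' < n \<Longrightarrow> P m 0 (P m' j' a) = P m 0 1 * P (m + m') j' a"
  unfolding CC_def using n2 by auto

lemma CC1: "CC \<Longrightarrow> j' < n \<Longrightarrow> P m 1 (P m' j' a) = P m 1 1 * P (m + m') j' a +
    P (m + 1) 0 1 * (if 1 + j' < n then sc (q ^ m') (P (m + m') (1 + j') a) else 0)"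
proof -
  assume "CC" "j' < n"
  moreover have "1 < n" using n2 by simp
  ultimately show ?thesis unfolding CC_def by (auto simp: sum01)
qed


lemma P_nn[simp]: "P n l a = P 0 l a" unfolding P_def by simp
lemma nn: "n - 1 + 1 = n" using n2 by simp
lemma nn': "n - 1 + Suc i = n + i" using n2 by simp

lemma recur:
  assumes U: UU and M: MM and C: CC and e1: "P 1 0 1 = 0"
  shows "Suc j < n \<Longrightarrow> P m (Suc j) a = sc (p ^ m) (cx * (P m j a - P (Suc m) j a))"
proof -
  assume j: "Suc j < n"
  have U1: "P 0 0 1 = 1" using U unfolding UU_def by simp
  have Ua: "P 0 0 a = a" for a using U unfolding UU_def by simp
  have P1: "P 1 0 a = 0" for a using MM0[OF M, of 1 1 a] e1 by simp
  have en: "P (n - 1) 0 1 = 0"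
  proof -
    have "P (n - 1) 0 (P 1 0 1) = P (n - 1) 0 1 * P (n - 1 + 1) 0 1" using CC0[OF C, of 0 "n - 1" 1 1] n2 by simp
    thus ?thesis unfolding nn using e1 U1 P_0 n2 by simp
  qed
  define u where "u = P (n - 1) 1 1"
  have u: "u = - sc q cx"
  proof -
    have "P (n - 1) 1 (P 1 0 1) = P (n - 1) 1 1 * P (n - 1 + 1) 0 1 + P (n - 1 + 1) 0 1 * (if 1 + 0 < n then sc (q ^ 1) (P (n - 1 + 1) (1 + 0) 1) else 0)"
      using CC1[OF C, of 0 "n - 1" 1 1] n2 by simp
    hence "0 = u + sc q cx" unfolding nn u_def using e1 U1 P_0 n2 P01 by simp
    thus ?thesis by (simp add: eq_neg_iff_add_eq_0)
  qed
  have Pb: "P (n - 1) 1 b = - sc q (cx * b)" for b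
  proof -
    have "P (n - 1) 1 (b * 1) = P (n - 1) 1 b * P (n - 1) 0 1 + P (n - 1 + 1) 0 b * P (n - 1) 1 1"
      using MM1[OF M, of "n - 1" b 1] .
    hence "P (n - 1) 1 b = b * u" unfolding nn en u_def using Ua by simp
    thus ?thesis using u cen by (simp add: sc_mulR cx_def)
  qed
  have "P (n - 1) 1 (P (Suc m) j a) = P (n - 1) 1 1 * P (n - 1 + Suc m) j a +
    P (n - 1 + 1) 0 1 * (if 1 + j < n then sc (q ^ Suc m) (P (n - 1 + Suc m) (1 + j) a) else 0)"
    using CC1[OF C, of j "n - 1" "Suc m" a] j by simp
  hence "- sc q (cx * P (Suc m) j a) = - sc q (cx * P m j a) + sc (q ^ Suc m) (P m (Suc j) a)"
    unfolding nn nn' Pb u_def[symmetric] u using U1 j by (simp add: sc_mulL)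
  hence "sc (q ^ Suc m) (P m (Suc j) a) = sc q (cx * P m j a) - sc q (cx * P (Suc m) j a)"
    by (simp add: algebra_simps)
  hence "sc (p ^ Suc m) (sc (q ^ Suc m) (P m (Suc j) a)) = sc (p ^ Suc m) (sc q (cx * (P m j a - P (Suc m) j a)))"
    by (simp add: sc_diffR right_diff_distrib)
  moreover have "sc (p ^ Suc m) (sc (q ^ Suc m) (P m (Suc j) a)) = P m (Suc j) a"
  proof -
    have "p ^ Suc m * q ^ Suc m = 1" by (metis power_mult_distrib pq power_one)
    thus ?thesis by (simp only: sc_assoc[symmetric] sc_one)
  qed
  moreover have "sc (p ^ Suc m) (sc q x) = sc (p ^ m) x" for x
  proof -
    have "p ^ Suc m * q = p ^ m" by (simp add: mult.commute mult.left_commute)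
    thus ?thesis by (simp only: sc_assoc[symmetric])
  qed
  ultimately show ?thesis by simp
qed

lemma global_case:
  assumes U: UU and M: MM and C: CC and e1: "P 1 0 1 = 1"
  shows "\<forall>i<n. \<forall>j<n. act (i, j) 1 = (if j = 0 then 1 else 0)"
proof -
  have U1: "P 0 0 1 = 1" using U unfolding UU_def by simp
  have "cx = cx + cx" using MM1[OF M, of 0 1 1] U1 e1 P01 by simp
  hence c0: "cx = 0" by simp
  have e: "P m 0 1 = 1" for m
  proof (induction m)
    case 0 show ?case using U1 .
  next
    case (Suc m)
    have "P 1 0 (P m 0 1) = P 1 0 1 * P (1 + m) 0 1" using CC0[OF C, of 0 1 m 1] n2 by simp
    thus ?case using Suc e1 by simp
  qed
  have z0: "1 \<le> j \<Longrightarrow> j < n \<Longrightarrow> P 0 j 1 = 0" for j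
  proof (induction j rule: dec_induct)
    case base show ?case using P01 c0 by simp
  next
    case (step j)
    have "P 0 1 (P 0 j 1) = P 0 1 1 * P 0 j 1 + P 1 0 1 * (if 1 + j < n then sc (q ^ 0) (P 0 (1 + j) 1) else 0)"
      using CC1[OF C, of j 0 0 1] step by simp
    moreover have "P 0 1 (P 0 j 1) = 0" using step P_0 n2 by simp
    ultimately show ?case using step P01 c0 e1 by simp
  qed
  have z: "1 \<le> j \<Longrightarrow> j < n \<Longrightarrow> P i j 1 = 0" for i j
  proof -
    assume j: "1 \<le> j" "j < n"
    have "P i 0 (P 0 j 1) = P i 0 1 * P i j 1" using CC0[OF C, of j i 0 1] j by simp
    thus ?thesis using z0[OF j] e[of i] P_0 n2 by simp
  qed
  show ?thesis
  proof (intro allI impI)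
    fix i j assume ij: "i < n" "j < n"
    have "act (i, j) 1 = P i j 1" unfolding P_def using ij by simp
    thus "act (i, j) 1 = (if j = 0 then 1 else 0)" using e[of i] z[of j i] ij by auto
  qed
qed

end


lemma tri_Suc: "Suc k * k div 2 = k * (k - 1) div 2 + (k::nat)"
  by (cases k) (auto simp: algebra_simps)

context taftc
begin

definition beta where
  "beta j k = (-1) ^ k * p ^ (k * (k - 1) div 2) * qbinom p j k"
definition S where
  "S j m a = (\<Sum>k = 0..j. sc (beta j k) (P (m + k) 0 a))"
definition FF where
  "FF m j a = sc (p ^ (m * j)) (cx ^ j * S j m a)"

lemma beta_Suc: "beta (Suc j) k = beta j k - (if k = 0 then 0 else p ^ j * beta j (k - 1))"
proof (cases k)
  case 0 thus ?thesis unfolding beta_def by simp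
next
  case (Suc k')
  have o: "qbinom p (Suc j) (Suc k') = qbinom p j (Suc k') + p ^ (j - k') * qbinom p j k'" by (rule qbinom_other)
  have key: "(-1) ^ Suc k' * p ^ (Suc k' * k' div 2) * (p ^ (j - k') * qbinom p j k') = - (p ^ j * ((-1) ^ k' * p ^ (k' * (k' - 1) div 2) * qbinom p j k'))"
  proof (cases "k' \<le> j")
    case True
    have "Suc k' * k' div 2 + (j - k') = k' * (k' - 1) div 2 + j" using True tri_Suc[of k'] by simp
    hence E: "p ^ (Suc k' * k' div 2) * p ^ (j - k') = p ^ j * p ^ (k' * (k' - 1) div 2)"
      by (metis power_add add.commute)
    have "(-1) ^ Suc k' * p ^ (Suc k' * k' div 2) * (p ^ (j - k') * qbinom p j k') =
       - ((-1) ^ k' * (p ^ (Suc k' * k' div 2) * p ^ (j - k')) * qbinom p j k')"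
      by (simp only: power_Suc mult.assoc mult_minus1 minus_mult_left)
    also have "\<dots> = - ((-1) ^ k' * (p ^ j * p ^ (k' * (k' - 1) div 2)) * qbinom p j k')"
      by (simp only: E)
    also have "\<dots> = - (p ^ j * ((-1) ^ k' * p ^ (k' * (k' - 1) div 2) * qbinom p j k'))"
      by (simp only: mult.assoc mult.left_commute)
    finally show ?thesis .
  next
    case False thus ?thesis by (simp add: qbinom_gt)
  qed
  have "beta (Suc j) (Suc k') = beta j (Suc k') + (-1) ^ Suc k' * p ^ (Suc k' * k' div 2) * (p ^ (j - k') * qbinom p j k')"
    unfolding beta_def o by (simp only: diff_Suc_1 distrib_left)
  also have "\<dots> = beta j (Suc k') - p ^ j * beta j k'" unfolding key beta_def by simp
  finally show ?thesis using Suc by simp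
qed

lemma S_Suc: "S (Suc j) m a = S j m a - sc (p ^ j) (S j (Suc m) a)"
proof -
  have "S (Suc j) m a = (\<Sum>k = 0..Suc j. sc (beta j k) (P (m + k) 0 a) - sc (if k = 0 then 0 else p ^ j * beta j (k - 1)) (P (m + k) 0 a))"
    unfolding S_def beta_Suc sc_diffL ..
  also have "\<dots> = (\<Sum>k = 0..Suc j. sc (beta j k) (P (m + k) 0 a)) - (\<Sum>k = 0..Suc j. sc (if k = 0 then 0 else p ^ j * beta j (k - 1)) (P (m + k) 0 a))"
    by (rule sum_subtractf)
  also have "(\<Sum>k = 0..Suc j. sc (beta j k) (P (m + k) 0 a)) = S j m a"
    unfolding S_def by (simp add: beta_def qbinom_gt)
  also have "(\<Sum>k = 0..Suc j. sc (if k = 0 then 0 else p ^ j * beta j (k - 1)) (P (m + k) 0 a)) = sc (p ^ j) (S j (Suc m) a)"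
    unfolding S_def sum.atLeast0_atMost_Suc_shift by (simp add: sc_sumR sc_assoc)
  finally show ?thesis .
qed

lemma FF0: "FF m 0 a = P m 0 a" unfolding FF_def S_def beta_def by simp

lemma FF_rec: "FF m (Suc j) a = sc (p ^ m) (cx * (FF m j a - FF (Suc m) j a))"
proof -
  have s1: "p ^ (m * Suc j) = p ^ m * p ^ (m * j)" by (simp add: power_add)
  have s2: "p ^ (m * Suc j) * p ^ j = p ^ m * p ^ (Suc m * j)" by (simp add: power_add algebra_simps)
  have "FF m (Suc j) a = sc (p ^ (m * Suc j)) (cx ^ Suc j * S j m a) - sc (p ^ (m * Suc j) * p ^ j) (cx ^ Suc j * S j (Suc m) a)"
    unfolding FF_def S_Suc by (simp add: right_diff_distrib sc_diffR sc_mulR sc_assoc)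
  also have "\<dots> = sc (p ^ m * p ^ (m * j)) (cx * (cx ^ j * S j m a)) - sc (p ^ m * p ^ (Suc m * j)) (cx * (cx ^ j * S j (Suc m) a))"
    unfolding s2 s1 by (simp add: power_add mult_ac)
  also have "\<dots> = sc (p ^ m) (cx * (FF m j a - FF (Suc m) j a))"
    unfolding FF_def by (simp add: right_diff_distrib sc_diffR sc_mulR sc_assoc)
  finally show ?thesis .
qed

lemma FF_uniq:
  assumes base: "\<And>m a. Q m 0 a = P m 0 a"
    and rec: "\<And>m j a. Suc j < n \<Longrightarrow> Q m (Suc j) a = sc (p ^ m) (cx * (Q m j a - Q (Suc m) j a))"
  shows "j < n \<Longrightarrow> Q m j a = FF m j a"
proof (induction j arbitrary: m)
  case 0 thus ?case using base FF0 by simp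
next
  case (Suc j) thus ?case using rec[OF Suc.prems] FF_rec by simp
qed

end


context taftc
begin

lemma cen': "cx * x = x * cx" using cen unfolding cx_def by blast
lemma cen2: "x * (cx * y) = cx * (x * y)" by (metis cen' mult.assoc)

lemma pascal_step:
  assumes j: "Suc j < n"
    and U: "\<And>r l. Suc l < n \<Longrightarrow> Uf r (Suc l) = sc (p ^ r) (cx * (Uf r l - Uf (Suc r) l))"
    and W: "\<And>k. k \<le> j \<Longrightarrow> W m (Suc k) = sc (p ^ m) (cx * (W m k - W (Suc m) k))"
  shows "(\<Sum>k = 0..Suc j. sc (qbinom q (Suc j) k) (Uf (m + k) (Suc j - k) * W m k)) =
    sc (p ^ m) (cx * ((\<Sum>k = 0..j. sc (qbinom q j k) (Uf (m + k) (j - k) * W m k)) -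
                      (\<Sum>k = 0..j. sc (qbinom q j k) (Uf (Suc m + k) (j - k) * W (Suc m) k))))"
proof -
  let ?X = "\<lambda>k. Uf (m + k) (Suc j - k) * W m k"
  have tmw: "sc (q ^ k * qbinom q j k) (?X k) + sc (qbinom q j k) (?X (Suc k)) =
      sc (qbinom q j k * p ^ m) (cx * (Uf (m + k) (j - k) * W m k) - cx * (Uf (Suc m + k) (j - k) * W (Suc m) k))"
    if k: "k \<le> j" for k
  proof -
    let ?U1 = "Uf (m + k) (j - k)" and ?U2 = "Uf (Suc m + k) (j - k)"
    let ?V1 = "W m k" and ?V2 = "W (Suc m) k"
    have x1: "?X k = sc (p ^ (m + k)) (cx * (?U1 - ?U2)) * ?V1"
    proof -
      have "Suc j - k = Suc (j - k)" using k by simp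
      moreover have "Suc (j - k) < n" using j k by simp
      ultimately show ?thesis using U[of "j - k" "m + k"] by simp
    qed
    have x2: "?X (Suc k) = ?U2 * sc (p ^ m) (cx * (?V1 - ?V2))"
      using W[OF k] by simp
    have s: "q ^ k * qbinom q j k * p ^ (m + k) = qbinom q j k * p ^ m"
    proof -
      have "q ^ k * p ^ k = 1" by (metis power_mult_distrib qp power_one)
      thus ?thesis by (simp add: power_add algebra_simps)
    qed
    have e1: "sc (q ^ k * qbinom q j k) (?X k) = sc (qbinom q j k * p ^ m) (cx * (?U1 * ?V1) - cx * (?U2 * ?V1))"
      unfolding x1 sc_mulL sc_assoc[symmetric] s by (simp add: algebra_simps)
    have e2: "sc (qbinom q j k) (?X (Suc k)) = sc (qbinom q j k * p ^ m) (cx * (?U2 * ?V1) - cx * (?U2 * ?V2))"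
      unfolding x2 sc_mulR sc_assoc[symmetric] by (simp add: algebra_simps cen2)
    show ?thesis unfolding e1 e2 sc_addR[symmetric] by simp
  qed
  have "(\<Sum>k = 0..Suc j. sc (qbinom q (Suc j) k) (?X k)) =
      (\<Sum>k = 0..Suc j. sc (q ^ k * qbinom q j k) (?X k)) + (\<Sum>k = 0..Suc j. sc (if k = 0 then 0 else qbinom q j (k - 1)) (?X k))"
    unfolding qbinom_Suc[of q j] sc_addL sum.distrib by (simp add: add.commute)
  also have "(\<Sum>k = 0..Suc j. sc (q ^ k * qbinom q j k) (?X k)) = (\<Sum>k = 0..j. sc (q ^ k * qbinom q j k) (?X k))"
    by (simp add: qbinom_gt)
  also have "(\<Sum>k = 0..Suc j. sc (if k = 0 then 0 else qbinom q j (k - 1)) (?X k)) = (\<Sum>k = 0..j. sc (qbinom q j k) (?X (Suc k)))"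
    by (simp only: sum.atLeast0_atMost_Suc_shift) simp
  also have "(\<Sum>k = 0..j. sc (q ^ k * qbinom q j k) (?X k)) + (\<Sum>k = 0..j. sc (qbinom q j k) (?X (Suc k))) =
      (\<Sum>k = 0..j. sc (qbinom q j k * p ^ m) (cx * (Uf (m + k) (j - k) * W m k) - cx * (Uf (Suc m + k) (j - k) * W (Suc m) k)))"
    unfolding sum.distrib[symmetric] by (intro sum.cong refl, rule tmw) simp
  also have "\<dots> = sc (p ^ m) (cx * ((\<Sum>k = 0..j. sc (qbinom q j k) (Uf (m + k) (j - k) * W m k)) -
                      (\<Sum>k = 0..j. sc (qbinom q j k) (Uf (Suc m + k) (j - k) * W (Suc m) k))))"
    by (simp add: sc_sumR sum_distrib_left sc_mulR sc_diffR right_diff_distrib sum_subtractf sc_assoc sc_comm[of "p ^ m"])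
  finally show ?thesis .
qed

end


lemma inv_cancel: "a * b = 1 \<Longrightarrow> b * c = 1 \<Longrightarrow> a = (c::'b::comm_ring_1)"
  by (metis mult.assoc mult_1_left mult_1_right)

lemma neg1_sq: "(-1::'b::comm_ring_1) ^ k * (-1) ^ k = 1"
  by (simp add: power_mult_distrib[symmetric])

lemma sum_periodic_shift:
  assumes per: "\<And>t. g (t + n) = (g t :: 'b::ab_group_add)" and n: "n \<ge> 1"
  shows "(\<Sum>k = 0..n - 1. g (Suc r + k)) = (\<Sum>k = 0..n - 1. g (r + k))"
proof -
  obtain N where N: "n = Suc N" using n by (cases n) auto
  have "g (r + 0) + (\<Sum>k = 0..N. g (r + Suc k)) = (\<Sum>k = 0..N. g (r + k)) + g (r + Suc N)"
    using sum.atLeast0_atMost_Suc_shift[of "\<lambda>k. g (r + k)" N] sum.atLeast0_atMost_Suc[of "\<lambda>k. g (r + k)" N] by simp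
  moreover have "g (r + Suc N) = g (r + 0)" using per[of r] N by simp
  ultimately have "(\<Sum>k = 0..N. g (r + Suc k)) = (\<Sum>k = 0..N. g (r + k))" by (simp add: algebra_simps)
  thus ?thesis using N by simp
qed

context taftc
begin

lemma qb_n1: "k \<le> n - 1 \<Longrightarrow> qbinom p (n - 1) k = (-1) ^ k * q ^ (Suc k * k div 2)"
proof (induction k)
  case 0 thus ?case by simp
next
  case (Suc k)
  let ?N = "n - 1" and ?s = "Suc k"
  have sN: "Suc ?N = n" using n2 by simp
  have Y: "qbinom p ?N k = (-1) ^ k * q ^ (Suc k * k div 2)" using Suc by simp
  have d: "qbinom p n ?s = qbinom p ?N k + p ^ ?s * qbinom p ?N ?s" using qbinom_Suc_Suc[of p ?N k] sN by simp
  have o: "qbinom p n ?s = qbinom p ?N ?s + p ^ (?N - k) * qbinom p ?N k" using qbinom_other[of p ?N k] sN by simp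
  have pq_s: "p ^ (?N - k) = q ^ ?s"
  proof -
    have "?N - k + ?s = n" using Suc.prems by simp
    hence "p ^ (?N - k) * p ^ ?s = 1" using pn by (metis power_add)
    moreover have "p ^ ?s * q ^ ?s = 1" by (metis power_mult_distrib pq power_one)
    ultimately show ?thesis by (rule inv_cancel)
  qed
  have qs1: "q ^ ?s \<noteq> 1" using qm[of ?s] Suc.prems n2 by simp
  have ps1: "1 - p ^ ?s \<noteq> 0"
  proof
    assume "1 - p ^ ?s = 0"
    hence "p ^ ?s = 1" by simp
    hence "q ^ ?s = 1" by (metis inverse_1 power_inverse inverse_inverse_eq)
    thus False using qs1 by simp
  qed
  have eq1: "(1 - p ^ ?s) * qbinom p ?N ?s = (1 - q ^ ?s) * qbinom p ?N k"
    using d o pq_s by (simp add: algebra_simps)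
  have eq2: "1 - q ^ ?s = (1 - p ^ ?s) * uminus (q ^ ?s)"
  proof -
    have "p ^ ?s * q ^ ?s = 1" by (metis power_mult_distrib pq power_one)
    thus ?thesis by (simp add: algebra_simps)
  qed
  have "(1 - p ^ ?s) * qbinom p ?N ?s = (1 - p ^ ?s) * (uminus (q ^ ?s) * qbinom p ?N k)"
    using eq1 unfolding eq2 by (simp add: mult.assoc)
  hence X: "qbinom p ?N ?s = uminus (q ^ ?s) * qbinom p ?N k" using ps1 mult_left_cancel by blast
  have t: "Suc ?s * ?s div 2 = Suc k * k div 2 + ?s" using tri_Suc[of ?s] by simp
  show ?case unfolding X Y t power_add by (simp add: mult_ac)
qed

lemma beta_n1: "k \<le> n - 1 \<Longrightarrow> beta (n - 1) k = q ^ k"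
proof -
  assume k: "k \<le> n - 1"
  have t: "Suc k * k div 2 = k * (k - 1) div 2 + k" by (rule tri_Suc)
  have pq_t: "p ^ (k * (k - 1) div 2) * q ^ (k * (k - 1) div 2) = 1" by (metis power_mult_distrib pq power_one)
  have "beta (n - 1) k = ((-1) ^ k * (-1) ^ k) * (p ^ (k * (k - 1) div 2) * q ^ (k * (k - 1) div 2)) * q ^ k"
    unfolding beta_def qb_n1[OF k] t power_add by (simp only: mult_ac)
  also have "\<dots> = q ^ k" unfolding pq_t neg1_sq by simp
  finally show ?thesis .
qed

lemma P_last:
  assumes form: "\<And>m j a. j < n \<Longrightarrow> P m j a = FF m j a"
  shows "P (Suc r) (n - 1) a = P r (n - 1) a"
proof -
  define g where "g t = sc (q ^ t) (P t 0 a)" for t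
  have per: "g (t + n) = g t" for t
  proof -
    have "q ^ (t + n) = q ^ t" by (simp add: power_add qn)
    thus ?thesis unfolding g_def by simp
  qed
  have F: "P r (n - 1) a = cx ^ (n - 1) * (\<Sum>k = 0..n - 1. g (r + k))" for r
  proof -
    have pr: "p ^ (r * (n - 1)) = q ^ r"
    proof -
      have "r * (n - 1) + r = r * n" using n2 by (simp add: algebra_simps)
      hence "p ^ (r * (n - 1)) * p ^ r = p ^ (r * n)" by (simp only: power_add[symmetric])
      also have "\<dots> = (p ^ n) ^ r" by (simp only: power_mult[symmetric] mult.commute)
      finally have "p ^ (r * (n - 1)) * p ^ r = 1" using pn by simp
      hence "p ^ (r * (n - 1)) * p ^ r * q ^ r = q ^ r" by simp
      moreover have "p ^ r * q ^ r = 1" by (metis power_mult_distrib pq power_one)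
      ultimately show ?thesis by (simp add: mult.assoc)
    qed
    have "P r (n - 1) a = FF r (n - 1) a" using form n2 by simp
    also have "\<dots> = sc (q ^ r) (cx ^ (n - 1) * (\<Sum>k = 0..n - 1. sc (q ^ k) (P (r + k) 0 a)))"
    proof -
      have "(\<Sum>k = 0..n - 1. sc (beta (n - 1) k) (P (r + k) 0 a)) = (\<Sum>k = 0..n - 1. sc (q ^ k) (P (r + k) 0 a))"
      proof (intro sum.cong refl)
        fix k assume "k \<in> {0..n - 1}"
        hence k: "k \<le> n - 1" by simp
        show "sc (beta (n - 1) k) (P (r + k) 0 a) = sc (q ^ k) (P (r + k) 0 a)" by (simp only: beta_n1[OF k])
      qed
      thus ?thesis unfolding FF_def S_def pr by simp
    qed
    also have "\<dots> = cx ^ (n - 1) * (\<Sum>k = 0..n - 1. g (r + k))"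
      unfolding g_def by (simp add: sc_mulR[symmetric] sc_sumR sc_assoc[symmetric] power_add)
    finally show ?thesis .
  qed
  show ?thesis unfolding F using sum_periodic_shift[of g n r, OF per] n2 by simp
qed

end


context taftc
begin

lemma fwd_case:
  assumes U: UU and M: MM and C: CC and e1: "P 1 0 1 = 0"
  shows "MC" and "CCn" and "\<And>m j a. j < n \<Longrightarrow> P m j a = FF m j a"
    and "\<And>m. P m 0 cx = sc (p ^ m) (P m 0 1 * cx)"
proof -
  show MC unfolding MC_def using MM0[OF M] by blast
  show CCn unfolding CCn_def using CC0[OF C, of 0] n2 by simp
  show F: "\<And>m j a. j < n \<Longrightarrow> P m j a = FF m j a"
    by (rule FF_uniq[of P]) (simp_all add: recur[OF U M C e1])
  fix m
  have i: "P m 0 (P 0 1 1) = P m 0 1 * P m 1 1" using CC0[OF C, of 1 m 0 1] n2 by simp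
  have r: "P m 1 1 = sc (p ^ m) (cx * (P m 0 1 - P (Suc m) 0 1))" using recur[OF U M C e1, of 0 m 1] n2 by simp
  have ee: "P m 0 1 * P m 0 1 = P m 0 1" using MM0[OF M, of m 1 1] by simp
  have ee1: "P m 0 1 * P (Suc m) 0 1 = 0"
  proof -
    have "P m 0 (P 1 0 1) = P m 0 1 * P (m + 1) 0 1" using CC0[OF C, of 0 m 1 1] n2 by simp
    thus ?thesis using e1 P_0 n2 by simp
  qed
  have "P m 0 cx = P m 0 1 * sc (p ^ m) (cx * (P m 0 1 - P (Suc m) 0 1))" using i r P01 by simp
  also have "\<dots> = sc (p ^ m) (cx * (P m 0 1 * P m 0 1 - P m 0 1 * P (Suc m) 0 1))"
    by (simp add: sc_mulR cen2 right_diff_distrib mult.assoc)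
  also have "\<dots> = sc (p ^ m) (P m 0 1 * cx)" using ee ee1 cen' by simp
  finally show "P m 0 cx = sc (p ^ m) (P m 0 1 * cx)" .
qed

lemma rev_case:
  assumes U: UU and MCa: MC and CCa: CCn
    and form: "\<And>m j a. j < n \<Longrightarrow> P m j a = FF m j a"
    and ii: "\<And>m. P m 0 cx = sc (p ^ m) (P m 0 1 * cx)"
  shows "MM" and "CC"
proof -
  have R: "P m (Suc j) a = sc (p ^ m) (cx * (P m j a - P (Suc m) j a))" if "Suc j < n" for m j a
    using form[of "Suc j" m a] form[of j m a] form[of j "Suc m" a] that FF_rec by simp
  have mc: "P m 0 (a * a') = P m 0 a * P m 0 a'" for m a a' using MCa unfolding MC_def by blast
  have ccn: "P m 0 (P m' 0 a) = P m 0 1 * P (m + m') 0 a" for m m' a using CCa unfolding CCn_def by blast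
  have n0: "0 < n" using n2 by simp
  have MMj: "j < n \<Longrightarrow> P m j (a * a') = (\<Sum>k = 0..j. sc (qbinom q j k) (P (m + k) (j - k) a * P m k a'))" for j m a a'
  proof (induction j arbitrary: m)
    case 0 thus ?case using mc by simp
  next
    case (Suc j)
    have jn: "j < n" using Suc.prems by simp
    have "P m (Suc j) (a * a') = sc (p ^ m) (cx * (P m j (a * a') - P (Suc m) j (a * a')))" using R Suc.prems by simp
    also have "\<dots> = sc (p ^ m) (cx * ((\<Sum>k = 0..j. sc (qbinom q j k) (P (m + k) (j - k) a * P m k a')) -
                      (\<Sum>k = 0..j. sc (qbinom q j k) (P (Suc m + k) (j - k) a * P (Suc m) k a'))))"
      using Suc.IH[OF jn, of m] Suc.IH[OF jn, of "Suc m"] by simp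
    also have "\<dots> = (\<Sum>k = 0..Suc j. sc (qbinom q (Suc j) k) (P (m + k) (Suc j - k) a * P m k a'))"
    proof (rule pascal_step[symmetric, where Uf = "\<lambda>r l. P r l a" and W = "\<lambda>m k. P m k a'"])
      show "Suc j < n" using Suc.prems .
      show "\<And>r l. Suc l < n \<Longrightarrow> P r (Suc l) a = sc (p ^ r) (cx * (P r l a - P (Suc r) l a))" using R by blast
      show "\<And>k. k \<le> j \<Longrightarrow> P m (Suc k) a' = sc (p ^ m) (cx * (P m k a' - P (Suc m) k a'))"
        using R Suc.prems by simp
    qed
    finally show ?case .
  qed
  show MM unfolding MM_def using MMj by blast
  have ee: "P m 0 1 * P m 0 1 = P m 0 1" for m using mc[of m 1 1] by simp
  have CC0': "j' < n \<Longrightarrow> P m 0 (P m' j' a) = P m 0 1 * P (m + m') j' a" for j' m m' a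
  proof (induction j' arbitrary: m')
    case 0 thus ?case using ccn by simp
  next
    case (Suc j')
    have jn: "j' < n" using Suc.prems by simp
    let ?e = "P m 0 1"
    let ?Z = "P (m + m') j' a - P (Suc (m + m')) j' a"
    have "P m 0 (P m' (Suc j') a) = P m 0 (sc (p ^ m') (cx * (P m' j' a - P (Suc m') j' a)))"
      using R Suc.prems by simp
    also have "\<dots> = sc (p ^ m') (P m 0 cx * (P m 0 (P m' j' a) - P m 0 (P (Suc m') j' a)))"
      using n0 by (simp add: P_sc mc P_diff)
    also have "\<dots> = sc (p ^ m') (sc (p ^ m) (?e * cx) * (?e * ?Z))"
      using Suc.IH[OF jn, of m'] Suc.IH[OF jn, of "Suc m'"] ii by (simp add: right_diff_distrib)
    also have "\<dots> = sc (p ^ m' * p ^ m) ((?e * ?e) * (cx * ?Z))"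
      by (simp add: sc_mulL sc_assoc mult.assoc cen2)
    also have "\<dots> = ?e * sc (p ^ (m + m')) (cx * ?Z)"
      using ee by (simp add: sc_mulR power_add mult.commute mult.assoc)
    also have "\<dots> = ?e * P (m + m') (Suc j') a" using R Suc.prems by simp
    finally show ?case .
  qed
  define V where "V m m' j' k a = (if k + j' < n then sc (q ^ (k * m')) (P (m + m') (k + j') a) else 0)" for m m' j' k a
  have VS: "V m m' j' (Suc k) a = sc (p ^ m) (cx * (V m m' j' k a - V (Suc m) m' j' k a))" for m m' j' k a
  proof (cases "Suc k + j' < n")
    case True
    let ?Z = "P (m + m') (k + j') a - P (Suc (m + m')) (k + j') a"
    have "V m m' j' (Suc k) a = sc (q ^ (Suc k * m')) (sc (p ^ (m + m')) (cx * ?Z))"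
      unfolding V_def using True R[of "k + j'" "m + m'" a] by simp
    also have "\<dots> = sc (q ^ (k * m') * p ^ m) (cx * ?Z)"
    proof -
      have "q ^ m' * p ^ m' = 1" by (metis power_mult_distrib qp power_one)
      hence "q ^ (Suc k * m') * p ^ (m + m') = q ^ (k * m') * p ^ m"
        by (simp add: power_add algebra_simps)
      thus ?thesis by (simp add: sc_assoc[symmetric])
    qed
    also have "\<dots> = sc (p ^ m) (cx * (V m m' j' k a - V (Suc m) m' j' k a))"
      unfolding V_def using True by (simp add: sc_assoc sc_comm[of "p ^ m"] sc_mulR sc_diffR right_diff_distrib)
    finally show ?thesis .
  next
    case False
    show ?thesis
    proof (cases "k + j' < n")
      case True
      hence kj: "k + j' = n - 1" using False by simp
      have "P (Suc (m + m')) (n - 1) a = P (m + m') (n - 1) a" by (rule P_last[OF form])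
      thus ?thesis unfolding V_def using True False kj by simp
    next
      case False2: False
      thus ?thesis unfolding V_def using False by simp
    qed
  qed
  have CCj: "j < n \<Longrightarrow> j' < n \<Longrightarrow> P m j (P m' j' a) = (\<Sum>k = 0..j. sc (qbinom q j k) (P (m + k) (j - k) 1 * V m m' j' k a))" for j m m' j' a
  proof (induction j arbitrary: m)
    case 0 thus ?case using CC0' unfolding V_def by simp
  next
    case (Suc j)
    have jn: "j < n" using Suc.prems by simp
    let ?y = "P m' j' a"
    have "P m (Suc j) ?y = sc (p ^ m) (cx * (P m j ?y - P (Suc m) j ?y))" using R Suc.prems by simp
    also have "\<dots> = sc (p ^ m) (cx * ((\<Sum>k = 0..j. sc (qbinom q j k) (P (m + k) (j - k) 1 * V m m' j' k a)) -
                      (\<Sum>k = 0..j. sc (qbinom q j k) (P (Suc m + k) (j - k) 1 * V (Suc m) m' j' k a))))"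
      using Suc.IH[OF jn Suc.prems(2), of m] Suc.IH[OF jn Suc.prems(2), of "Suc m"] by simp
    also have "\<dots> = (\<Sum>k = 0..Suc j. sc (qbinom q (Suc j) k) (P (m + k) (Suc j - k) 1 * V m m' j' k a))"
    proof (rule pascal_step[symmetric, where Uf = "\<lambda>r l. P r l 1" and W = "\<lambda>m k. V m m' j' k a"])
      show "Suc j < n" using Suc.prems(1) .
      show "\<And>r l. Suc l < n \<Longrightarrow> P r (Suc l) 1 = sc (p ^ r) (cx * (P r l 1 - P (Suc r) l 1))" using R by blast
      show "\<And>k. k \<le> j \<Longrightarrow> V m m' j' (Suc k) a = sc (p ^ m) (cx * (V m m' j' k a - V (Suc m) m' j' k a))"
        using VS by blast
    qed
    finally show ?case .
  qed
  show CC unfolding CC_def using CCj unfolding V_def by blast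
qed

end


context taftc
begin

lemma FF_mod: "FF (m mod n) j a = FF m j a"
proof -
  have "p ^ (m mod n * j) = p ^ (m * j)" by (metis p_mod power_mult)
  moreover have "P (m mod n + k) 0 a = P (m + k) 0 a" for k
    by (metis P_mod mod_add_left_eq)
  ultimately show ?thesis unfolding FF_def S_def by simp
qed

lemma form_iff:
  "(\<forall>i<n. \<forall>j<n. \<forall>a. act (i, j) a =
               sc (inverse q ^ (i * j))
                 (act (0, 1) 1 ^ j *
                  (\<Sum>k = 0..j. sc ((- 1) ^ k * inverse q ^ (k * (k - 1) div 2) * qbinom (inverse q) j k)
                                  (act ((i + k) mod n, 0) a)))) \<longleftrightarrow>
   (\<forall>m j a. j < n \<longrightarrow> P m j a = FF m j a)"
proof -
  have e: "FF i j a = sc (inverse q ^ (i * j))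
                 (act (0, 1) 1 ^ j *
                  (\<Sum>k = 0..j. sc ((- 1) ^ k * inverse q ^ (k * (k - 1) div 2) * qbinom (inverse q) j k)
                                  (act ((i + k) mod n, 0) a)))" for i j a
    unfolding FF_def S_def beta_def P_def cx_def ..
  show ?thesis
  proof
    assume H: "\<forall>i<n. \<forall>j<n. \<forall>a. act (i, j) a =
               sc (inverse q ^ (i * j))
                 (act (0, 1) 1 ^ j *
                  (\<Sum>k = 0..j. sc ((- 1) ^ k * inverse q ^ (k * (k - 1) div 2) * qbinom (inverse q) j k)
                                  (act ((i + k) mod n, 0) a)))"
    show "\<forall>m j a. j < n \<longrightarrow> P m j a = FF m j a"
    proof (intro allI impI)
      fix m j a assume j: "j < n"
      have mn: "m mod n < n" using n2 by simp
      have "P m j a = act (m mod n, j) a" unfolding P_def ..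
      also have "\<dots> = FF (m mod n) j a" unfolding e using H mn j by blast
      finally show "P m j a = FF m j a" using FF_mod by simp
    qed
  next
    assume H: "\<forall>m j a. j < n \<longrightarrow> P m j a = FF m j a"
    show "\<forall>i<n. \<forall>j<n. \<forall>a. act (i, j) a =
               sc (inverse q ^ (i * j))
                 (act (0, 1) 1 ^ j *
                  (\<Sum>k = 0..j. sc ((- 1) ^ k * inverse q ^ (k * (k - 1) div 2) * qbinom (inverse q) j k)
                                  (act ((i + k) mod n, 0) a)))"
    proof (intro allI impI)
      fix i j a assume i: "i < n" and j: "j < n"
      have "act (i, j) a = P i j a" unfolding P_def using i by simp
      also have "\<dots> = FF i j a" using H j by blast
      finally show "act (i, j) a =
               sc (inverse q ^ (i * j))
                 (act (0, 1) 1 ^ j *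
                  (\<Sum>k = 0..j. sc ((- 1) ^ k * inverse q ^ (k * (k - 1) div 2) * qbinom (inverse q) j k)
                                  (act ((i + k) mod n, 0) a)))" unfolding e .
    qed
  qed
qed

lemma ii_iff:
  "(\<forall>i<n. act (i, 0) (act (0, 1) 1) = sc (inverse q ^ i) (act (i, 0) 1 * act (0, 1) 1)) \<longleftrightarrow>
   (\<forall>m. P m 0 cx = sc (p ^ m) (P m 0 1 * cx))"
proof
  assume H: "\<forall>i<n. act (i, 0) (act (0, 1) 1) = sc (inverse q ^ i) (act (i, 0) 1 * act (0, 1) 1)"
  show "\<forall>m. P m 0 cx = sc (p ^ m) (P m 0 1 * cx)"
  proof
    fix m
    have mn: "m mod n < n" using n2 by simp
    have "P m 0 cx = sc (p ^ (m mod n)) (P m 0 1 * cx)" unfolding P_def cx_def using H mn by blast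
    thus "P m 0 cx = sc (p ^ m) (P m 0 1 * cx)" unfolding p_mod .
  qed
next
  assume H: "\<forall>m. P m 0 cx = sc (p ^ m) (P m 0 1 * cx)"
  show "\<forall>i<n. act (i, 0) (act (0, 1) 1) = sc (inverse q ^ i) (act (i, 0) 1 * act (0, 1) 1)"
  proof (intro allI impI)
    fix i assume "i < n"
    thus "act (i, 0) (act (0, 1) 1) = sc (inverse q ^ i) (act (i, 0) 1 * act (0, 1) 1)"
      using H[rule_format, of i] unfolding P_def cx_def by simp
  qed
qed

lemma main:
  assumes g1: "act (1, 0) 1 = 0 \<or> act (1, 0) 1 = 1"
  shows "partial_action sc (taft_basis n) (taft_mu n q) (taft_Delta n q) (basis_el (0, 0)) act
     \<longleftrightarrow>
     (global_action sc (taft_basis n) (taft_mu n q) (taft_Delta n q) (basis_el (0, 0)) taft_eps act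
      \<or> (partial_action sc {..<n} (cn_mu n) cn_Delta (basis_el 0) (\<lambda>i. act (i, 0))
         \<and> act (1, 0) 1 = 0
         \<and> (\<forall>i<n. \<forall>j<n. \<forall>a. act (i, j) a =
               sc (inverse q ^ (i * j))
                 (act (0, 1) 1 ^ j *
                  (\<Sum>k = 0..j. sc ((- 1) ^ k * inverse q ^ (k * (k - 1) div 2) * qbinom (inverse q) j k)
                                  (act ((i + k) mod n, 0) a))))
         \<and> (\<forall>i<n. act (i, 0) (act (0, 1) 1) = sc (inverse q ^ i) (act (i, 0) 1 * act (0, 1) 1))))"
proof -
  have e1: "act (1, 0) 1 = P 1 0 1" unfolding P_def using n2 by simp
  show ?thesis
    unfolding global_T_iff partial_P_iff partial_Cn_P_iff form_iff ii_iff e1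
  proof
    assume L: "UU \<and> MM \<and> CC"
    hence U: UU and M: MM and C: CC by blast+
    show "(UU \<and> MM \<and> CC) \<and> (\<forall>i<n. \<forall>j<n. act (i, j) 1 = (if j = 0 then 1 else 0)) \<or>
      (UU \<and> MC \<and> CCn) \<and> P 1 0 1 = 0 \<and> (\<forall>m j a. j < n \<longrightarrow> P m j a = FF m j a) \<and> (\<forall>m. P m 0 cx = sc (p ^ m) (P m 0 1 * cx))"
    proof (cases "P 1 0 1 = 0")
      case True
      thus ?thesis using fwd_case[OF U M C True] U by blast
    next
      case False
      hence "P 1 0 1 = 1" using g1 e1 by simp
      thus ?thesis using global_case[OF U M C] L by blast
    qed
  next
    assume R: "(UU \<and> MM \<and> CC) \<and> (\<forall>i<n. \<forall>j<n. act (i, j) 1 = (if j = 0 then 1 else 0)) \<or>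
      (UU \<and> MC \<and> CCn) \<and> P 1 0 1 = 0 \<and> (\<forall>m j a. j < n \<longrightarrow> P m j a = FF m j a) \<and> (\<forall>m. P m 0 cx = sc (p ^ m) (P m 0 1 * cx))"
    show "UU \<and> MM \<and> CC"
    proof (cases "UU \<and> MM \<and> CC")
      case True thus ?thesis .
    next
      case False
      hence H: "UU" "MC" "CCn" "\<forall>m j a. j < n \<longrightarrow> P m j a = FF m j a" "\<forall>m. P m 0 cx = sc (p ^ m) (P m 0 1 * cx)"
        using R by blast+
      show ?thesis using rev_case[OF H(1,2,3)] H(4,5) H(1) by blast
    qed
  qed
qed

end


theorem corollary3p12:
  fixes sc :: "'k::field \<Rightarrow> 'a::ring_1 \<Rightarrow> 'a" and n :: nat and q :: 'k
    and act :: "nat \<times> nat \<Rightarrow> 'a \<Rightarrow> 'a"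
  assumes alg: "is_algebra sc"
    and n2: "n \<ge> 2"
    and prim: "primitive_root n q"
    and lin: "\<forall>b\<in>taft_basis n. linear_map sc (act b)"
    and g1: "act (1, 0) 1 = 0 \<or> act (1, 0) 1 = 1"
    and x1: "\<forall>a. act (0, 1) 1 * a = a * act (0, 1) 1"
  shows "partial_action sc (taft_basis n) (taft_mu n q) (taft_Delta n q) (basis_el (0, 0)) act
     \<longleftrightarrow>
     (global_action sc (taft_basis n) (taft_mu n q) (taft_Delta n q) (basis_el (0, 0)) taft_eps act
      \<or> (partial_action sc {..<n} (cn_mu n) cn_Delta (basis_el 0) (\<lambda>i. act (i, 0))
         \<and> act (1, 0) 1 = 0
         \<and> (\<forall>i<n. \<forall>j<n. \<forall>a. act (i, j) a =
               sc (inverse q ^ (i * j))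
                 (act (0, 1) 1 ^ j *
                  (\<Sum>k = 0..j. sc ((- 1) ^ k * inverse q ^ (k * (k - 1) div 2) * qbinom (inverse q) j k)
                                  (act ((i + k) mod n, 0) a))))
         \<and> (\<forall>i<n. act (i, 0) (act (0, 1) 1) = sc (inverse q ^ i) (act (i, 0) 1 * act (0, 1) 1))))"
proof -
  interpret T: taftc sc n q act
    by unfold_locales (use alg n2 prim lin x1 in auto)
  show ?thesis by (rule T.main[OF g1])
qed


end
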